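(* There exists an absolute constant $L$ such that for all $t\in\mathbb N$ and all real $\vartheta$ with $\lvert\vartheta\rvert\le\pi$ we have \[ \Bigl\lvert\gamma_t(\vartheta)-\exp\Bigl(-\frac{v_t}{2}\vartheta^2\Bigr)\Bigr\rvert\le LN\lvert\vartheta\rvert^3, \] where $N=\lvert t\rvert_{\mathtt{01}}$.
   Context: For $n\in\mathbb N=\{0,1,\dots\}$, $\lvert n\rvert_{\mathtt{01}}$ denotes the number of maximal blocks of $\mathtt 1$s in the binary expansion of $n$ (equivalently, the number of occurrences of $\mathtt{01}$ after padding with a leading $\mathtt 0$). Let $\mathsf r(n)$ be the number of (overlapping) occurrences of $\mathtt{11}$ in the binary expansion of $n$, $d(t,n)=\mathsf r(n+t)-\mathsf r(n)$, and $c_t(k)$ the asymptotic density (which exists) of $\{n\in\mathbb N:d(t,n)=k\}$, $k\in\mathbb Z$. Let $\gamma_t(\vartheta)=\sum_{k\in\mathbb Z}c_t(k)\exp(ik\vartheta)$. Define $(v_t)_{t\in\mathbb N}$ by $v_0=0$, $v_1=3/2$, $v_{4t}=v_{2t}$, $v_{4t+2}=v_{2t+1}+1$, $v_{2t+1}=\frac{v_t+v_{t+1}}2+\frac34$ (this is the variance of the distribution $c_t$). *)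

theory Defs
  imports "HOL-Analysis.Analysis"
begin

text \<open>Number of maximal blocks of 1s in the binary expansion of n
  (= occurrences of 01 after padding with a leading 0): read the
  binary expansion from the least significant bit; a block ends
  (towards the top) exactly at a position where the bit is 1 and the
  next higher bit is 0, i.e. where the two lowest bits of the shifted
  number are 01.\<close>
fun blocks01 :: "nat \<Rightarrow> nat" where
  "blocks01 n = (if n = 0 then 0
      else (if n mod 4 = 1 then 1 else 0) + blocks01 (n div 2))"

fun r11 :: "nat \<Rightarrow> nat" where
  "r11 n = (if n = 0 then 0
      else (if n mod 4 = 3 then 1 else 0) + r11 (n div 2))"

definition dd :: "nat \<Rightarrow> nat \<Rightarrow> int" where
  "dd t n = int (r11 (n + t)) - int (r11 n)"

text \<open>Asymptotic density of {n. d(t,n) = k} (it exists, as stated in the paper).\<close>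
definition cdens :: "nat \<Rightarrow> int \<Rightarrow> real" where
  "cdens t k = lim (\<lambda>M. real (card {n. n < M \<and> dd t n = k}) / real M)"

definition gam :: "nat \<Rightarrow> real \<Rightarrow> complex" where
  "gam t \<theta> = (\<Sum>\<^sub>\<infinity> k\<in>(UNIV :: int set).
      complex_of_real (cdens t k) * exp (\<i> * of_int k * complex_of_real \<theta>))"

function vv :: "nat \<Rightarrow> real" where
  "vv n = (if n = 0 then 0 else if n = 1 then 3/2
      else if even n then
        (if even (n div 2) then vv (n div 2) else vv (n div 2) + 1)
      else (vv (n div 2) + vv (n div 2 + 1)) / 2 + 3/4)"
  by pat_completeness auto
termination
  by (relation "Wellfounded.measure id") (auto elim!: oddE)

end

theory Submission
  imports Defs
begin


declare vv.simps[simp del] r11.simps[simp del] blocks01.simps[simp del]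

lemma vv0[simp]: "vv 0 = 0" by (subst vv.simps) simp
lemma vv1[simp]: "vv (Suc 0) = 3/2" by (subst vv.simps) simp
lemma r11_0[simp]: "r11 0 = 0" by (subst r11.simps) simp
lemma r11_1[simp]: "r11 (Suc 0) = 0" by (subst r11.simps) simp

lemma r11_step: "r11 n = (if n mod 4 = 3 then 1 else 0) + r11 (n div 2)"
  by (cases "n = 0") (simp_all add: r11.simps[of n])

lemma r11_split_aux:
  "s < 2 ^ Suc k \<Longrightarrow> r11 (2 ^ Suc k * q + s) = r11 q + r11 s + (if odd q \<and> 2 ^ k \<le> s then 1 else 0)"
proof (induction k arbitrary: s)
  case 0
  then have s: "s = 0 \<or> s = 1" by auto
  have r1: "r11 1 = 0" by (simp add: r11_step[of 1])
  have "r11 (2 * q + s) = (if (2*q+s) mod 4 = 3 then 1 else 0) + r11 q"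
    using s by (subst r11_step) auto
  moreover have "(2*q+s) mod 4 = 3 \<longleftrightarrow> s = 1 \<and> odd q"
    using s by (auto elim!: oddE) presburger+
  ultimately show ?case using s r1 by auto
next
  case (Suc k)
  have m4: "(2 ^ Suc (Suc k) * q + s) mod 4 = s mod 4"
  proof -
    have "(2::nat) ^ Suc (Suc k) = 4 * 2 ^ k" by simp
    then show ?thesis by (simp add: mod_add_left_eq[symmetric])
  qed
  have d2: "(2 ^ Suc (Suc k) * q + s) div 2 = 2 ^ Suc k * q + s div 2" by simp
  have lt: "s div 2 < 2 ^ Suc k" using Suc.prems by simp
  have "r11 (2 ^ Suc (Suc k) * q + s) = (if s mod 4 = 3 then 1 else 0) + r11 (2 ^ Suc k * q + s div 2)"
    by (subst r11_step) (simp only: m4 d2)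
  also have "\<dots> = (if s mod 4 = 3 then 1 else 0) + (r11 q + r11 (s div 2) + (if odd q \<and> 2 ^ k \<le> s div 2 then 1 else 0))"
    using Suc.IH[OF lt] by simp
  also have "(2::nat) ^ k \<le> s div 2 \<longleftrightarrow> 2 ^ Suc k \<le> s" by auto
  finally show ?case by (subst (2) r11_step) simp
qed

lemma r11_split:
  assumes "1 \<le> K" "s < 2 ^ K"
  shows "r11 (2 ^ K * q + s) = r11 q + r11 s + (if odd q \<and> 2 ^ (K - 1) \<le> s then 1 else 0)"
proof -
  obtain k where K: "K = Suc k" using assms(1) by (cases K) auto
  show ?thesis using r11_split_aux[of s k q] assms(2) K by simp
qed

lemma dd_period:
  assumes "1 \<le> K" "s + t < 2 ^ K" "s < 2 ^ (K - 1) \<longleftrightarrow> s + t < 2 ^ (K - 1)"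
  shows "dd t (2 ^ K * q + s) = dd t s"
proof -
  have "r11 (2 ^ K * q + s + t) = r11 (2 ^ K * q + (s + t))" by (simp add: add.assoc)
  also have "\<dots> = r11 q + r11 (s + t) + (if odd q \<and> 2 ^ (K - 1) \<le> s + t then 1 else 0)"
    using r11_split[OF assms(1) assms(2)] .
  finally have a: "r11 (2 ^ K * q + s + t) = r11 q + r11 (s + t) + (if odd q \<and> 2 ^ (K - 1) \<le> s + t then 1 else 0)" .
  have b: "r11 (2 ^ K * q + s) = r11 q + r11 s + (if odd q \<and> 2 ^ (K - 1) \<le> s then 1 else 0)"
    using r11_split[OF assms(1)] assms(2) by simp
  show ?thesis unfolding dd_def using a b assms(3) by (simp add: not_le[symmetric])
qed

lemma r11_even: "r11 (2 * m) = r11 m"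
proof -
  have "(2 * m) mod 4 \<noteq> 3" by presburger
  then show ?thesis by (subst r11_step) auto
qed

lemma r11_odd: "r11 (2 * m + 1) = r11 m + (if odd m then 1 else 0)"
proof -
  have "(2 * m + 1) mod 4 = 3 \<longleftrightarrow> odd m" by presburger
  then show ?thesis by (subst r11_step) auto
qed

lemma vv_even: "vv (2 * u) = vv u + (if odd u then 1 else 0)"
  by (subst vv.simps) auto

lemma vv_odd: "vv (2 * u + 1) = (vv u + vv (u + 1)) / 2 + 3 / 4"
proof (cases "u = 0")
  case True
  then show ?thesis by (simp add: vv.simps[of 1] vv.simps[of 0])
next
  case False
  then show ?thesis by (subst vv.simps) auto
qed

lemma vv_nonneg: "vv n \<ge> 0"
proof (induction n rule: less_induct)
  case (less n)
  show ?case
  proof (cases "n = 0")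
    case True then show ?thesis by (simp add: vv.simps[of 0])
  next
    case False
    obtain u b where n: "n = 2 * u + b" "b < 2" by (metis div_mult_mod_eq mod_less_divisor pos2 mult.commute)
    show ?thesis
    proof (cases "b = 0")
      case True
      then have "u < n" using n False by auto
      then show ?thesis using less[of u] n True vv_even[of u] by auto
    next
      case b: False
      then have b1: "b = 1" using n by auto
      show ?thesis
      proof (cases "u = 0")
        case True then show ?thesis using n b1 by (simp add: vv.simps[of 1])
      next
        case False
        then have "u < n" "u + 1 < n" using n b1 by auto
        then show ?thesis using less[of u] less[of "u+1"] n b1 vv_odd[of u] by auto
      qed
    qed
  qed
qed

lemma lin_helper: "(a::real) = w/2 + c \<Longrightarrow> \<bar>w\<bar> \<le> 3/2 \<Longrightarrow> -3/4 \<le> c \<Longrightarrow> c \<le> 3/4 \<Longrightarrow> \<bar>a\<bar> \<le> 3/2"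
  unfolding abs_le_iff by linarith

lemma vv_diff: "\<bar>vv (s + 1) - vv s\<bar> \<le> 3 / 2"
proof (induction s rule: less_induct)
  case (less s)
  show ?case
  proof (cases "s = 0")
    case True then show ?thesis by simp
  next
    case False
    obtain u b where n: "s = 2 * u + b" "b < 2" by (metis div_mult_mod_eq mod_less_divisor pos2 mult.commute)
    have ul: "u < s" using n False by auto
    have IH: "\<bar>vv (u + 1) - vv u\<bar> \<le> 3 / 2" using less[OF ul] .
    show ?thesis
    proof (cases "b = 0")
      case True
      have "vv (s + 1) - vv s = (vv (u+1) - vv u) / 2 + (3/4 - (if odd u then 1 else 0))"
        using n True vv_odd[of u] vv_even[of u] by simp
      then show ?thesis by (rule lin_helper[OF _ IH]) auto
    next
      case False
      then have b1: "b = 1" using n by auto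
      have e: "s + 1 = 2 * (u + 1)" using n b1 by simp
      have "vv (s + 1) - vv s = (vv (u+1) - vv u) / 2 + ((if even u then 1 else 0) - 3/4)"
        using n b1 vv_odd[of u] vv_even[of "u+1"] e by (simp add: field_simps)
      then show ?thesis by (rule lin_helper[OF _ IH]) auto
    qed
  qed
qed


definition zz :: "real \<Rightarrow> int \<Rightarrow> complex" where
  "zz \<theta> k = exp (\<i> * of_int k * complex_of_real \<theta>)"

definition SS :: "nat \<Rightarrow> nat \<Rightarrow> nat \<Rightarrow> real \<Rightarrow> complex" where
  "SS K t e \<theta> = (\<Sum>n | n < 2 ^ K \<and> n mod 2 = e. zz \<theta> (dd t n)) / 2 ^ K"

lemma zz_add: "zz \<theta> (a + b) = zz \<theta> a * zz \<theta> b"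
  unfolding zz_def by (simp add: distrib_left distrib_right exp_add[symmetric])

lemma zz_0[simp]: "zz \<theta> 0 = 1" unfolding zz_def by simp

lemma norm_zz[simp]: "norm (zz \<theta> k) = 1"
  unfolding zz_def by (simp add: norm_exp_i_times[of "of_int k * \<theta>", simplified] mult.assoc)

lemma sum_split_parity:
  fixes f :: "nat \<Rightarrow> 'b::comm_monoid_add"
  assumes "e \<le> 1"
  shows "(\<Sum>n | n < 2 ^ Suc K \<and> n mod 2 = e. f n) =
    (\<Sum>m | m < 2 ^ K \<and> m mod 2 = 0. f (2 * m + e)) + (\<Sum>m | m < 2 ^ K \<and> m mod 2 = 1. f (2 * m + e))"
proof -
  have im: "{n. n < 2 ^ Suc K \<and> n mod 2 = e} = (\<lambda>m. 2 * m + e) ` {m. m < 2 ^ K}"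
  proof (rule set_eqI, rule iffI)
    fix n assume "n \<in> {n. n < 2 ^ Suc K \<and> n mod 2 = e}"
    then have "n = 2 * (n div 2) + e" "n div 2 < 2 ^ K" by auto
    then show "n \<in> (\<lambda>m. 2 * m + e) ` {m. m < 2 ^ K}" by blast
  next
    fix n assume "n \<in> (\<lambda>m. 2 * m + e) ` {m. m < 2 ^ K}"
    then show "n \<in> {n. n < 2 ^ Suc K \<and> n mod 2 = e}" using assms by auto
  qed
  have inj: "inj_on (\<lambda>m. 2 * m + e) {m. m < 2 ^ K}" by (auto simp: inj_on_def)
  have "(\<Sum>n | n < 2 ^ Suc K \<and> n mod 2 = e. f n) = (\<Sum>m | m < 2 ^ K. f (2 * m + e))"
    unfolding im by (subst sum.reindex[OF inj]) simp
  also have "{m. m < (2::nat) ^ K} = {m. m < 2 ^ K \<and> m mod 2 = 0} \<union> {m. m < 2 ^ K \<and> m mod 2 = 1}"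
    by auto
  also have "(\<Sum>m \<in> {m. m < (2::nat) ^ K \<and> m mod 2 = 0} \<union> {m. m < 2 ^ K \<and> m mod 2 = 1}. f (2 * m + e)) =
     (\<Sum>m | m < 2 ^ K \<and> m mod 2 = 0. f (2 * m + e)) + (\<Sum>m | m < 2 ^ K \<and> m mod 2 = 1. f (2 * m + e))"
    by (rule sum.union_disjoint) auto
  finally show ?thesis .
qed

lemma SS_rec_gen:
  assumes "e \<le> 1"
    and h0: "\<And>m. m mod 2 = 0 \<Longrightarrow> zz \<theta> (dd t (2 * m + e)) = c0 * zz \<theta> (dd t' m)"
    and h1: "\<And>m. m mod 2 = 1 \<Longrightarrow> zz \<theta> (dd t (2 * m + e)) = c1 * zz \<theta> (dd t' m)"
  shows "SS (Suc K) t e \<theta> = (c0 * SS K t' 0 \<theta> + c1 * SS K t' 1 \<theta>) / 2"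
proof -
  have "(\<Sum>n | n < 2 ^ Suc K \<and> n mod 2 = e. zz \<theta> (dd t n)) =
    (\<Sum>m | m < 2 ^ K \<and> m mod 2 = 0. zz \<theta> (dd t (2 * m + e))) + (\<Sum>m | m < 2 ^ K \<and> m mod 2 = 1. zz \<theta> (dd t (2 * m + e)))"
    by (rule sum_split_parity[OF assms(1)])
  also have "\<dots> = c0 * (\<Sum>m | m < 2 ^ K \<and> m mod 2 = 0. zz \<theta> (dd t' m)) + c1 * (\<Sum>m | m < 2 ^ K \<and> m mod 2 = 1. zz \<theta> (dd t' m))"
    by (simp add: sum_distrib_left h0 h1)
  finally show ?thesis unfolding SS_def by (simp add: field_simps)
qed

lemma dd_ee: "dd (2 * u) (2 * m) = dd u m"
  unfolding dd_def by (metis r11_even distrib_left)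

lemma dd_eo: "dd (2 * u) (2 * m + 1) = dd u m + (if odd (m + u) then 1 else 0) - (if odd m then 1 else 0)"
proof -
  have "2 * m + 1 + 2 * u = 2 * (m + u) + 1" by simp
  then show ?thesis unfolding dd_def using r11_odd[of "m+u"] r11_odd[of m] by simp
qed

lemma dd_oe: "dd (2 * u + 1) (2 * m) = dd u m + (if odd (m + u) then 1 else 0)"
proof -
  have "2 * m + (2 * u + 1) = 2 * (m + u) + 1" by simp
  then show ?thesis unfolding dd_def using r11_odd[of "m+u"] r11_even[of m] by simp
qed

lemma dd_oo: "dd (2 * u + 1) (2 * m + 1) = dd (u + 1) m - (if odd m then 1 else 0)"
proof -
  have "2 * m + 1 + (2 * u + 1) = 2 * (m + (u + 1))" by simp
  then show ?thesis unfolding dd_def using r11_even[of "m+(u+1)"] r11_odd[of m] by simp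
qed

lemma SS_e0: "SS (Suc K) (2 * u) 0 \<theta> = (SS K u 0 \<theta> + SS K u 1 \<theta>) / 2"
  using SS_rec_gen[of 0 \<theta> "2*u" 1 u 1 K] by (simp add: dd_ee)

lemma SS_e1: "SS (Suc K) (2 * u) 1 \<theta> =
   (zz \<theta> (if odd u then 1 else 0) * SS K u 0 \<theta> + zz \<theta> (if odd u then -1 else 0) * SS K u 1 \<theta>) / 2"
proof (rule SS_rec_gen)
  fix m :: nat assume m: "m mod 2 = 0"
  have "odd (m + u) \<longleftrightarrow> odd u" "\<not> odd m" using m by presburger+
  then have "dd (2 * u) (2 * m + 1) = dd u m + (if odd u then 1 else 0)"
    using dd_eo[of u m] by simp
  then show "zz \<theta> (dd (2 * u) (2 * m + 1)) = zz \<theta> (if odd u then 1 else 0) * zz \<theta> (dd u m)"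
    by (simp add: zz_add mult.commute)
next
  fix m :: nat assume m: "m mod 2 = 1"
  have "odd (m + u) \<longleftrightarrow> even u" "odd m" using m by presburger+
  then have "dd (2 * u) (2 * m + 1) = dd u m + (if odd u then -1 else 0)"
    using dd_eo[of u m] by simp
  then show "zz \<theta> (dd (2 * u) (2 * m + 1)) = zz \<theta> (if odd u then -1 else 0) * zz \<theta> (dd u m)"
    by (simp add: zz_add mult.commute)
qed simp

lemma SS_o0: "SS (Suc K) (2 * u + 1) 0 \<theta> =
   (zz \<theta> (if odd u then 1 else 0) * SS K u 0 \<theta> + zz \<theta> (if odd u then 0 else 1) * SS K u 1 \<theta>) / 2"
proof (rule SS_rec_gen)
  fix m :: nat assume m: "m mod 2 = 0"
  have "odd (m + u) \<longleftrightarrow> odd u" using m by presburger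
  then have "dd (2 * u + 1) (2 * m + 0) = dd u m + (if odd u then 1 else 0)"
    using dd_oe[of u m] by simp
  then show "zz \<theta> (dd (2 * u + 1) (2 * m + 0)) = zz \<theta> (if odd u then 1 else 0) * zz \<theta> (dd u m)"
    by (simp add: zz_add mult.commute)
next
  fix m :: nat assume m: "m mod 2 = 1"
  have "odd (m + u) \<longleftrightarrow> even u" using m by presburger
  then have "dd (2 * u + 1) (2 * m + 0) = dd u m + (if odd u then 0 else 1)"
    using dd_oe[of u m] by simp
  then show "zz \<theta> (dd (2 * u + 1) (2 * m + 0)) = zz \<theta> (if odd u then 0 else 1) * zz \<theta> (dd u m)"
    by (simp add: zz_add mult.commute)
qed simp

lemma SS_o1: "SS (Suc K) (2 * u + 1) 1 \<theta> = (SS K (u + 1) 0 \<theta> + zz \<theta> (-1) * SS K (u + 1) 1 \<theta>) / 2"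
proof -
  have "SS (Suc K) (2 * u + 1) 1 \<theta> = (1 * SS K (u + 1) 0 \<theta> + zz \<theta> (-1) * SS K (u + 1) 1 \<theta>) / 2"
  proof (rule SS_rec_gen)
    fix m :: nat assume m: "m mod 2 = 0"
    then have "even m" by presburger
    then have "dd (2 * u + 1) (2 * m + 1) = dd (u + 1) m" using dd_oo[of u m] by simp
    then show "zz \<theta> (dd (2 * u + 1) (2 * m + 1)) = 1 * zz \<theta> (dd (u + 1) m)"
      by simp
  next
    fix m :: nat assume m: "m mod 2 = 1"
    then have "odd m" by presburger
    then have "dd (2 * u + 1) (2 * m + 1) = dd (u + 1) m + (-1)"
      using dd_oo[of u m] by simp
    then show "zz \<theta> (dd (2 * u + 1) (2 * m + 1)) = zz \<theta> (-1) * zz \<theta> (dd (u + 1) m)"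
      by (simp only: zz_add mult.commute)
  qed simp
  then show ?thesis by simp
qed

lemma SS_0_0: "SS 0 0 0 \<theta> = 1"
proof -
  have "{n::nat. n < 2 ^ 0 \<and> n mod 2 = 0} = {0}" by auto
  then show ?thesis unfolding SS_def by (simp add: dd_def)
qed

lemma SS_0_1: "SS 0 0 1 \<theta> = 0"
proof -
  have "{n::nat. n < 2 ^ 0 \<and> n mod 2 = 1} = {}" by auto
  then show ?thesis unfolding SS_def by (simp only:) simp
qed

lemma SS_zero: "e \<le> 1 \<Longrightarrow> SS (Suc K) 0 e \<theta> = 1 / 2"
proof (induction K arbitrary: e)
  case 0
  show ?case
  proof (cases "e = 0")
    case True
    then show ?thesis using SS_e0[of 0 0 \<theta>] SS_0_0 SS_0_1 by simp
  next
    case False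
    then have "e = 1" using 0 by auto
    then show ?thesis using SS_e1[of 0 0 \<theta>] SS_0_0 SS_0_1 by simp
  qed
next
  case (Suc K)
  have a: "SS (Suc K) 0 0 \<theta> = 1/2" "SS (Suc K) 0 1 \<theta> = 1/2" using Suc.IH by auto
  show ?case
  proof (cases "e = 0")
    case True
    then show ?thesis using SS_e0[of "Suc K" 0 \<theta>, unfolded a] by simp
  next
    case False
    then have "e = 1" using Suc.prems by auto
    then show ?thesis using SS_e1[of "Suc K" 0 \<theta>, unfolded a] by simp
  qed
qed


lemma sum3: "(\<Sum>m<(3::nat). g m) = g 0 + g 1 + (g 2 :: real)"
  by (simp add: numeral_3_eq_3 numeral_2_eq_2)

lemma fact3: "(fact 3 :: real) = 6"
  by (simp add: numeral_3_eq_3 numeral_2_eq_2)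

lemma cos_taylor3: "\<bar>cos (x::real) - (1 - x^2/2)\<bar> \<le> \<bar>x\<bar>^3/6"
proof -
  obtain t where t: "cos x = (\<Sum>m<3. cos_coeff m * x ^ m) + (cos (t + 1/2 * real 3 * pi) / fact 3) * x ^ 3"
    using Maclaurin_cos_expansion[of x 3] by blast
  have c: "cos_coeff 0 = 1" "cos_coeff 1 = 0" "cos_coeff 2 = -1/2"
    by (simp_all add: cos_coeff_def numeral_2_eq_2)
  have s: "(\<Sum>m<3. cos_coeff m * x ^ m) = 1 - x^2/2"
    unfolding sum3 c by simp
  have "\<bar>cos (t + 1/2 * real 3 * pi)\<bar> \<le> 1" by simp
  then have "\<bar>cos (t + 1/2 * real 3 * pi)\<bar> * \<bar>x\<bar>^3 \<le> 1 * \<bar>x\<bar>^3"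
    by (intro mult_right_mono) auto
  then have "\<bar>(cos (t + 1/2 * real 3 * pi) / fact 3) * x ^ 3\<bar> \<le> \<bar>x\<bar>^3/6"
    unfolding fact3 by (simp add: abs_mult power_abs)
  then show ?thesis using t s by simp
qed

lemma sin_taylor3: "\<bar>sin (x::real) - x\<bar> \<le> \<bar>x\<bar>^3/6"
proof -
  have "\<bar>sin x - (\<Sum>m<3. sin_coeff m * x ^ m)\<bar> \<le> inverse (fact 3) * \<bar>x\<bar> ^ 3"
    by (rule Maclaurin_sin_bound)
  moreover have c: "sin_coeff 0 = 0" "sin_coeff 1 = 1" "sin_coeff 2 = 0"
    by (simp_all add: sin_coeff_def numeral_2_eq_2)
  moreover have "(\<Sum>m<3. sin_coeff m * x ^ m) = x"
    unfolding sum3 c by simp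
  ultimately show ?thesis unfolding fact3 by simp
qed

lemma cis_taylor: "cmod (Complex (cos (x::real)) (sin x) - Complex (1 - x^2/2) x) \<le> \<bar>x\<bar>^3/3"
proof -
  have "cmod (Complex (cos x) (sin x) - Complex (1 - x^2/2) x) \<le> \<bar>cos x - (1 - x^2/2)\<bar> + \<bar>sin x - x\<bar>"
    using cmod_le[of "Complex (cos x) (sin x) - Complex (1 - x^2/2) x"] by simp
  then show ?thesis using cos_taylor3[of x] sin_taylor3[of x] by linarith
qed

lemma zz_cis: "zz \<theta> k = Complex (cos (of_int k * \<theta>)) (sin (of_int k * \<theta>))"
proof -
  have "\<i> * of_int k * complex_of_real \<theta> = \<i> * complex_of_real (of_int k * \<theta>)" by simp
  then have "zz \<theta> k = cis (of_int k * \<theta>)" unfolding zz_def cis_conv_exp by (simp add: mult.assoc)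
  also have "cis (of_int k * \<theta>) = Complex (cos (of_int k * \<theta>)) (sin (of_int k * \<theta>))"
    by (simp add: complex_eq_iff)
  finally show ?thesis .
qed

lemma zz_taylor:
  assumes "\<alpha> \<in> {-1, 0, 1}"
  shows "cmod (zz \<theta> \<alpha> - Complex (1 - (of_int \<alpha>)^2 * \<theta>^2/2) (of_int \<alpha> * \<theta>)) \<le> \<bar>\<theta>\<bar>^3/3"
proof -
  consider "\<alpha> = 0" | "\<alpha> = 1" | "\<alpha> = -1" using assms by auto
  then show ?thesis
  proof cases
    case 1 then show ?thesis by (simp add: zz_cis Complex_eq_0 complex_eq_iff)
  next
    case 2 then show ?thesis using cis_taylor[of \<theta>] by (simp add: zz_cis)
  next
    case 3 then show ?thesis using cis_taylor[of "-\<theta>"] by (simp add: zz_cis)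
  qed
qed

lemma expm_taylor:
  fixes x :: real
  assumes "0 \<le> x"
  shows "\<bar>exp (-x) - (1 - x)\<bar> \<le> x^2"
proof -
  have lo: "1 - x \<le> exp (-x)" using exp_ge_add_one_self[of "-x"] by simp
  have e: "1 + x + x^2/2 \<le> exp x" using exp_lower_Taylor_quadratic[OF assms] .
  have pos: "0 < 1 + x + x^2/2" using assms by (simp add: add_pos_nonneg)
  have "exp (-x) * (1 + x + x^2/2) \<le> exp (-x) * exp x"
    by (rule mult_left_mono[OF e]) simp
  also have "\<dots> = 1" by (simp add: exp_minus)
  finally have a: "exp (-x) * (1 + x + x^2/2) \<le> 1" .
  have b: "1 \<le> (1 - x + x^2) * (1 + x + x^2/2)"
  proof -
    have "(1 - x + x^2) * (1 + x + x^2/2) = 1 + x^2/2 + x^3/2 + x^4/2"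
      by (simp add: field_simps power2_eq_square power3_eq_cube power4_eq_xxxx)
    moreover have "0 \<le> x^2/2 + x^3/2 + x^4/2" using assms by simp
    ultimately show ?thesis by linarith
  qed
  have "exp (-x) * (1 + x + x^2/2) \<le> (1 - x + x^2) * (1 + x + x^2/2)" using a b by linarith
  then have "exp (-x) \<le> 1 - x + x^2" using pos by (simp add: mult_le_cancel_right)
  then show ?thesis using lo by (simp add: abs_le_iff)
qed


lemma abs_mult_le: "\<bar>x::real\<bar> \<le> X \<Longrightarrow> \<bar>y\<bar> \<le> Y \<Longrightarrow> \<bar>x * y\<bar> \<le> X * Y"
  unfolding abs_mult by (rule mult_mono) auto

lemma gen_split: "a/2 - b = (c/2 - d) + (a - c)/2 - (b - (d::complex))"
  by (simp add: diff_divide_distrib)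

lemma pure_id: "(Complex (1 - al^2*\<theta>^2/2) (al*\<theta>) * Complex (1/2 + b*\<theta>^2) (a*\<theta>) + Complex (1 - be^2*\<theta>^2/2) (be*\<theta>) * Complex (1/2 - b*\<theta>^2) (-a*\<theta>))/2
   - of_real (1 - \<Delta>*\<theta>^2/2) * Complex (1/2 + (\<Delta>/4 - (al*a - be*a)/2 - (al^2+be^2)/8)*\<theta>^2) ((al+be)/4*\<theta>)
   = Complex (((be^2 - al^2)*b/4 + \<Delta>*(\<Delta>/4 - (al*a - be*a)/2 - (al^2+be^2)/8)/2) * \<theta>^4)
             (((al*b - al^2*a/2 - be*b + be^2*a/2)/2 + \<Delta>*((al+be)/4)/2) * \<theta>^3)"
proof -
  have re: "Re (Complex (1 - al^2*\<theta>^2/2) (al*\<theta>) * Complex (1/2 + b*\<theta>^2) (a*\<theta>) + Complex (1 - be^2*\<theta>^2/2) (be*\<theta>) * Complex (1/2 - b*\<theta>^2) (-a*\<theta>))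
     = (1 - al^2*\<theta>^2/2) * (1/2 + b*\<theta>^2) - (al*\<theta>)*(a*\<theta>) + ((1 - be^2*\<theta>^2/2)*(1/2 - b*\<theta>^2) - (be*\<theta>)*(-a*\<theta>))"
    by simp
  have im: "Im (Complex (1 - al^2*\<theta>^2/2) (al*\<theta>) * Complex (1/2 + b*\<theta>^2) (a*\<theta>) + Complex (1 - be^2*\<theta>^2/2) (be*\<theta>) * Complex (1/2 - b*\<theta>^2) (-a*\<theta>))
     = (1 - al^2*\<theta>^2/2) * (a*\<theta>) + (al*\<theta>) * (1/2 + b*\<theta>^2) + ((1 - be^2*\<theta>^2/2)*(-a*\<theta>) + (be*\<theta>)*(1/2 - b*\<theta>^2))"
    by simp
  show ?thesis
    apply (simp only: complex_eq_iff minus_complex.sel divide_complex_def)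
    apply (simp add: re im)
    apply (rule conjI; simp add: field_simps power2_eq_square power4_eq_xxxx power3_eq_cube)
    done
qed

lemma lin_r3: "\<bar>x1::real\<bar> \<le> 1/4 \<Longrightarrow> \<bar>x2\<bar> \<le> 1/4 \<Longrightarrow> \<bar>x3\<bar> \<le> 1/4 \<Longrightarrow> \<bar>x4\<bar> \<le> 1/4 \<Longrightarrow> \<bar>x5\<bar> \<le> 3/2*(1/2)
   \<Longrightarrow> \<bar>(x1 - x2/2 - x3 + x4/2)/2 + x5/2\<bar> \<le> 3/4"
  unfolding abs_le_iff by (simp add: field_simps; linarith)

lemma lin_Bn: "0 \<le> D \<Longrightarrow> D \<le> 3/2 \<Longrightarrow> \<bar>x6::real\<bar> \<le> 1/4 \<Longrightarrow> \<bar>x7\<bar> \<le> 1/4 \<Longrightarrow> \<bar>y1\<bar> \<le> 1 \<Longrightarrow> \<bar>y2\<bar> \<le> 1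
   \<Longrightarrow> \<bar>D/4 - (x6 - x7)/2 - (y1+y2)/8\<bar> \<le> 7/8"
  unfolding abs_le_iff by (simp add: field_simps; linarith)

lemma lin_h8: "\<bar>y1::real\<bar> \<le> 1 \<Longrightarrow> \<bar>y2\<bar> \<le> 1 \<Longrightarrow> \<bar>y2 - y1\<bar> \<le> 2"
  unfolding abs_le_iff by (simp add: field_simps; linarith)

lemma lin_c4: "\<bar>x8::real\<bar> \<le> 2*(1/4) \<Longrightarrow> \<bar>x9\<bar> \<le> 3/2*(7/8) \<Longrightarrow> \<bar>x8/4 + x9/2\<bar> \<le> 1"
  unfolding abs_le_iff by (simp add: field_simps; linarith)

lemma lin_P: "c \<le> \<bar>1/2 + u\<bar> + \<bar>v\<bar> \<Longrightarrow> \<bar>u::real\<bar> \<le> U \<Longrightarrow> \<bar>v\<bar> \<le> V \<Longrightarrow> c \<le> 1/2 + U + V"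
proof -
  assume a: "c \<le> \<bar>1/2 + u\<bar> + \<bar>v\<bar>" "\<bar>u::real\<bar> \<le> U" "\<bar>v\<bar> \<le> V"
  have "\<bar>1/2 + u\<bar> \<le> \<bar>1/2\<bar> + \<bar>u\<bar>" by (rule abs_triangle_ineq)
  then show ?thesis using a by simp
qed

lemma lin_pure: "x \<le> 1 * (4 * t) + 3/4 * t \<Longrightarrow> 0 \<le> t \<Longrightarrow> x \<le> 5 * (t::real)"
  by (simp add: field_simps; linarith)

lemma lin_final: "x \<le> p + (ra + rb)/2 + rq \<Longrightarrow> p \<le> 5*t \<Longrightarrow> ra \<le> t/3*6 \<Longrightarrow> rb \<le> t/3*6
   \<Longrightarrow> rq \<le> 9/4*t*17 \<Longrightarrow> 0 \<le> (t::real) \<Longrightarrow> x \<le> 50*t"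
  by (simp add: field_simps; linarith)


lemma loc_core:
  fixes al be a b \<Delta> \<theta> q :: real and za zb :: complex
  assumes za: "cmod (za - Complex (1 - al^2*\<theta>^2/2) (al*\<theta>)) \<le> \<bar>\<theta>\<bar>^3/3"
    and zb: "cmod (zb - Complex (1 - be^2*\<theta>^2/2) (be*\<theta>)) \<le> \<bar>\<theta>\<bar>^3/3"
    and al: "\<bar>al\<bar> \<le> 1" and be: "\<bar>be\<bar> \<le> 1"
    and a: "\<bar>a\<bar> \<le> 1/4" and b: "\<bar>b\<bar> \<le> 1/4" and D: "0 \<le> \<Delta>" "\<Delta> \<le> 3/2" and th: "\<bar>\<theta>\<bar> \<le> 4"
    and q: "\<bar>q - (1 - \<Delta>*\<theta>^2/2)\<bar> \<le> (\<Delta>*\<theta>^2/2)^2"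
  shows "cmod ((za * Complex (1/2 + b*\<theta>^2) (a*\<theta>) + zb * Complex (1/2 - b*\<theta>^2) (-a*\<theta>))/2
     - of_real q * Complex (1/2 + (\<Delta>/4 - (al*a - be*a)/2 - (al^2+be^2)/8)*\<theta>^2) ((al+be)/4*\<theta>)) \<le> 50 * \<bar>\<theta>\<bar>^3"
proof -
  define An where "An = (al+be)/4"
  define Bn where "Bn = \<Delta>/4 - (al*a - be*a)/2 - (al^2+be^2)/8"
  define Ta where "Ta = Complex (1 - al^2*\<theta>^2/2) (al*\<theta>)"
  define Tb where "Tb = Complex (1 - be^2*\<theta>^2/2) (be*\<theta>)"
  define P0 where "P0 = Complex (1/2 + b*\<theta>^2) (a*\<theta>)"
  define P1 where "P1 = Complex (1/2 - b*\<theta>^2) (-a*\<theta>)"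
  define Pn where "Pn = Complex (1/2 + Bn*\<theta>^2) (An*\<theta>)"
  define Ra where "Ra = za - Ta"
  define Rb where "Rb = zb - Tb"
  define Rq where "Rq = q - (1 - \<Delta>*\<theta>^2/2)"
  define r3 where "r3 = (al*b - al^2*a/2 - be*b + be^2*a/2)/2 + \<Delta>*An/2"
  define c4 where "c4 = (be^2 - al^2)*b/4 + \<Delta>*Bn/2"
  have pure: "(Ta * P0 + Tb * P1)/2 - of_real (1 - \<Delta>*\<theta>^2/2) * Pn = Complex (c4 * \<theta>^4) (r3 * \<theta>^3)"
    unfolding Ta_def Tb_def P0_def P1_def Pn_def c4_def r3_def An_def Bn_def
    by (rule pure_id)
  have split: "(za * P0 + zb * P1)/2 - of_real q * Pn =
      ((Ta * P0 + Tb * P1)/2 - of_real (1 - \<Delta>*\<theta>^2/2) * Pn) + (Ra * P0 + Rb * P1)/2 - of_real Rq * Pn"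
  proof -
    have e1: "Ra * P0 + Rb * P1 = (za * P0 + zb * P1) - (Ta * P0 + Tb * P1)"
      unfolding Ra_def Rb_def by (simp add: algebra_simps)
    have e2: "of_real Rq * Pn = of_real q * Pn - of_real (1 - \<Delta>*\<theta>^2/2) * Pn"
      unfolding Rq_def of_real_diff[of q] by (rule left_diff_distrib)
    show ?thesis unfolding e1 e2 by (rule gen_split)
  qed
  have th2: "\<theta>^2 \<le> 16"
  proof -
    have "\<bar>\<theta>\<bar>^2 \<le> 4^2" by (rule power_mono[OF th]) simp
    then show ?thesis by simp
  qed
  have th4: "\<theta>^4 \<le> 4 * \<bar>\<theta>\<bar>^3"
  proof -
    have e: "\<bar>\<theta>\<bar>^3 * \<bar>\<theta>\<bar> = \<bar>\<theta>\<bar>^4" by (simp add: power4_eq_xxxx power3_eq_cube)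
    have "\<bar>\<theta>\<bar>^4 = \<bar>\<theta>^4\<bar>" by (simp only: power_abs)
    also have "\<dots> = \<theta>^4" by simp
    finally have "\<theta>^4 = \<bar>\<theta>\<bar>^3 * \<bar>\<theta>\<bar>" using e by simp
    also have "\<dots> \<le> \<bar>\<theta>\<bar>^3 * 4" by (rule mult_left_mono[OF th]) simp
    finally show ?thesis by simp
  qed
  have t3: "0 \<le> \<bar>\<theta>\<bar>^3" by simp
  have al2: "\<bar>al^2\<bar> \<le> 1" using abs_mult_le[OF al al] by (simp add: power2_eq_square)
  have be2: "\<bar>be^2\<bar> \<le> 1" using abs_mult_le[OF be be] by (simp add: power2_eq_square)
  have An: "\<bar>An\<bar> \<le> 1/2" unfolding An_def using al be unfolding abs_le_iff by simp
  have h1: "\<bar>al*b\<bar> \<le> 1/4" using abs_mult_le[OF al b] by simp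
  have h2: "\<bar>al^2*a\<bar> \<le> 1/4" using abs_mult_le[OF al2 a] by simp
  have h3: "\<bar>be*b\<bar> \<le> 1/4" using abs_mult_le[OF be b] by simp
  have h4: "\<bar>be^2*a\<bar> \<le> 1/4" using abs_mult_le[OF be2 a] by simp
  have h5: "\<bar>\<Delta>*An\<bar> \<le> 3/2 * (1/2)" using abs_mult_le[OF _ An, of \<Delta> "3/2"] D by simp
  have r3b: "\<bar>r3\<bar> \<le> 3/4" unfolding r3_def by (rule lin_r3[OF h1 h2 h3 h4 h5])
  have h6: "\<bar>al*a\<bar> \<le> 1/4" using abs_mult_le[OF al a] by simp
  have h7: "\<bar>be*a\<bar> \<le> 1/4" using abs_mult_le[OF be a] by simp
  have Bn: "\<bar>Bn\<bar> \<le> 7/8" unfolding Bn_def by (rule lin_Bn[OF D h6 h7 al2 be2])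
  have h8: "\<bar>(be^2 - al^2)*b\<bar> \<le> 2 * (1/4)"
    by (rule abs_mult_le[OF lin_h8[OF al2 be2] b])
  have h9: "\<bar>\<Delta>*Bn\<bar> \<le> 3/2 * (7/8)" using abs_mult_le[OF _ Bn, of \<Delta> "3/2"] D by simp
  have c4b: "\<bar>c4\<bar> \<le> 1" unfolding c4_def by (rule lin_c4[OF h8 h9])
  have pureb: "cmod (Complex (c4 * \<theta>^4) (r3 * \<theta>^3)) \<le> 5 * \<bar>\<theta>\<bar>^3"
  proof -
    have "cmod (Complex (c4 * \<theta>^4) (r3 * \<theta>^3)) \<le> \<bar>c4 * \<theta>^4\<bar> + \<bar>r3 * \<theta>^3\<bar>"
      using cmod_le[of "Complex (c4 * \<theta>^4) (r3 * \<theta>^3)"] by simp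
    also have "\<bar>c4 * \<theta>^4\<bar> \<le> 1 * (4 * \<bar>\<theta>\<bar>^3)"
      using abs_mult_le[OF c4b, of "\<theta>^4" "4 * \<bar>\<theta>\<bar>^3"] th4 by simp
    also have "\<bar>r3 * \<theta>^3\<bar> \<le> 3/4 * \<bar>\<theta>\<bar>^3"
      using abs_mult_le[OF r3b, of "\<theta>^3" "\<bar>\<theta>\<bar>^3"] by (simp add: power_abs)
    finally have "cmod (Complex (c4 * \<theta>^4) (r3 * \<theta>^3)) \<le> 1 * (4 * \<bar>\<theta>\<bar>^3) + 3/4 * \<bar>\<theta>\<bar>^3"
      by simp
    then show ?thesis using t3 by (rule lin_pure)
  qed
  have P0b: "cmod P0 \<le> 6"
  proof -
    have "cmod P0 \<le> \<bar>1/2 + b*\<theta>^2\<bar> + \<bar>a*\<theta>\<bar>" using cmod_le[of P0] unfolding P0_def by simp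
    moreover have "\<bar>b*\<theta>^2\<bar> \<le> 1/4 * 16" using abs_mult_le[OF b, of "\<theta>^2" 16] th2 by simp
    moreover have "\<bar>a*\<theta>\<bar> \<le> 1/4 * 4" using abs_mult_le[OF a th] .
    ultimately have "cmod P0 \<le> 1/2 + 1/4*16 + 1/4*4" by (rule lin_P)
    then show ?thesis by simp
  qed
  have P1b: "cmod P1 \<le> 6"
  proof -
    have "cmod P1 \<le> \<bar>1/2 + (- b*\<theta>^2)\<bar> + \<bar>-a*\<theta>\<bar>" using cmod_le[of P1] unfolding P1_def by simp
    moreover have "\<bar>- b*\<theta>^2\<bar> \<le> 1/4 * 16" using abs_mult_le[OF b, of "\<theta>^2" 16] th2 by simp
    moreover have "\<bar>-a*\<theta>\<bar> \<le> 1/4 * 4" using abs_mult_le[OF a th] by simp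
    ultimately have "cmod P1 \<le> 1/2 + 1/4*16 + 1/4*4" by (rule lin_P)
    then show ?thesis by simp
  qed
  have Pnb: "cmod Pn \<le> 17"
  proof -
    have "cmod Pn \<le> \<bar>1/2 + Bn*\<theta>^2\<bar> + \<bar>An*\<theta>\<bar>" using cmod_le[of Pn] unfolding Pn_def by simp
    moreover have "\<bar>Bn*\<theta>^2\<bar> \<le> 7/8 * 16" using abs_mult_le[OF Bn, of "\<theta>^2" 16] th2 by simp
    moreover have "\<bar>An*\<theta>\<bar> \<le> 1/2 * 4" using abs_mult_le[OF An th] .
    ultimately have "cmod Pn \<le> 1/2 + 7/8*16 + 1/2*4" by (rule lin_P)
    then show ?thesis by simp
  qed
  have Rab: "cmod (Ra * P0) \<le> \<bar>\<theta>\<bar>^3/3 * 6"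
    unfolding norm_mult by (rule mult_mono) (use za P0b in \<open>auto simp: Ra_def Ta_def\<close>)
  have Rbb: "cmod (Rb * P1) \<le> \<bar>\<theta>\<bar>^3/3 * 6"
    unfolding norm_mult by (rule mult_mono) (use zb P1b in \<open>auto simp: Rb_def Tb_def\<close>)
  have Rqb0: "\<bar>Rq\<bar> \<le> 9/4 * \<bar>\<theta>\<bar>^3"
  proof -
    have "\<bar>Rq\<bar> \<le> (\<Delta>*\<theta>^2/2)^2" using q unfolding Rq_def .
    also have "(\<Delta>*\<theta>^2/2)^2 = \<Delta>^2 * \<theta>^4 / 4" by (simp add: power2_eq_square power4_eq_xxxx)
    also have "\<dots> \<le> (9/4) * (4 * \<bar>\<theta>\<bar>^3) / 4"
    proof -
      have "\<Delta>^2 \<le> (3/2)^2" by (rule power_mono) (use D in auto)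
      then have "\<Delta>^2 * \<theta>^4 \<le> (9/4) * (4 * \<bar>\<theta>\<bar>^3)"
        by (intro mult_mono th4) (auto simp: power2_eq_square)
      then show ?thesis by simp
    qed
    finally show ?thesis by simp
  qed
  have Rqb: "cmod (of_real Rq * Pn) \<le> 9/4 * \<bar>\<theta>\<bar>^3 * 17"
    unfolding norm_mult norm_of_real by (rule mult_mono) (use Rqb0 Pnb in auto)
  have "cmod ((za * P0 + zb * P1)/2 - of_real q * Pn) \<le>
      cmod (Complex (c4 * \<theta>^4) (r3 * \<theta>^3)) + (cmod (Ra * P0) + cmod (Rb * P1))/2 + cmod (of_real Rq * Pn)"
  proof -
    have "cmod ((za * P0 + zb * P1)/2 - of_real q * Pn) =
        cmod (Complex (c4 * \<theta>^4) (r3 * \<theta>^3) + (Ra * P0 + Rb * P1)/2 - of_real Rq * Pn)"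
      unfolding split pure ..
    also have "\<dots> \<le> cmod (Complex (c4 * \<theta>^4) (r3 * \<theta>^3) + (Ra * P0 + Rb * P1)/2) + cmod (of_real Rq * Pn)"
      by (rule norm_triangle_ineq4)
    also have "cmod (Complex (c4 * \<theta>^4) (r3 * \<theta>^3) + (Ra * P0 + Rb * P1)/2) \<le>
        cmod (Complex (c4 * \<theta>^4) (r3 * \<theta>^3)) + cmod ((Ra * P0 + Rb * P1)/2)"
      by (rule norm_triangle_ineq)
    also have "cmod ((Ra * P0 + Rb * P1)/2) \<le> (cmod (Ra * P0) + cmod (Rb * P1))/2"
      using norm_triangle_ineq[of "Ra * P0" "Rb * P1"] by simp
    finally show ?thesis by simp
  qed
  then have "cmod ((za * P0 + zb * P1)/2 - of_real q * Pn) \<le> 50 * \<bar>\<theta>\<bar>^3"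
    by (rule lin_final[OF _ pureb Rab Rbb Rqb t3])
  then show ?thesis unfolding P0_def P1_def Pn_def An_def Bn_def .
qed


definition AA :: "nat \<Rightarrow> nat \<Rightarrow> real" where
  "AA s e = (if even s then 0 else if e = 0 then 1/4 else -1/4)"

definition Bs :: "nat \<Rightarrow> real" where
  "Bs s = (if even s then (if even (s div 2) then 0 else 1/4)
     else (vv s - vv (s div 2))/4 - 1/8 - (if odd (s div 2) then 1/8 else 0))"

definition BB :: "nat \<Rightarrow> nat \<Rightarrow> real" where
  "BB s e = (if e = 0 then Bs s else - Bs s)"

definition XX :: "nat \<Rightarrow> nat \<Rightarrow> real \<Rightarrow> complex" where
  "XX s e \<theta> = of_real (exp (-(vv s/2) * \<theta>^2)) * Complex (1/2 + BB s e * \<theta>^2) (AA s e * \<theta>)"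

definition lc :: "real \<Rightarrow> real" where "lc \<theta> = 50 * \<bar>\<theta>\<bar>^3"

lemma lc_nonneg: "0 \<le> lc \<theta>" unfolding lc_def by simp

lemma AA_bound: "\<bar>AA s e\<bar> \<le> 1/4" unfolding AA_def by auto

lemma Delta_odd: "0 \<le> vv (2*u+1) - vv u \<and> vv (2*u+1) - vv u \<le> 3/2"
  using vv_diff[of u] unfolding vv_odd abs_le_iff by (simp add: field_simps; linarith)

lemma Delta_odd': "0 \<le> vv (2*u+1) - vv (u+1) \<and> vv (2*u+1) - vv (u+1) \<le> 3/2"
  using vv_diff[of u] unfolding vv_odd abs_le_iff by (simp add: field_simps; linarith)

lemma Bs_bound: "\<bar>Bs s\<bar> \<le> 1/4"
proof (cases "even s")
  case True then show ?thesis unfolding Bs_def by auto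
next
  case False
  then obtain u where s: "s = 2*u+1" by (metis oddE)
  have d: "s div 2 = u" using s by simp
  have D: "0 \<le> vv s - vv u" "vv s - vv u \<le> 3/2" using Delta_odd[of u] s by auto
  have "Bs s = (vv s - vv u)/4 - 1/8 - (if odd u then 1/8 else 0)"
    unfolding Bs_def using False d by simp
  then show ?thesis using D unfolding abs_le_iff by (cases "odd u"; simp add: field_simps; linarith)
qed

lemma BB_bound: "\<bar>BB s e\<bar> \<le> 1/4" unfolding BB_def using Bs_bound by auto

lemma AA1: "AA s 1 = - AA s 0" unfolding AA_def by simp
lemma BB1: "BB s 1 = - BB s 0" unfolding BB_def by simp

lemma XX1: "XX s 1 \<theta> = of_real (exp (-(vv s/2) * \<theta>^2)) * Complex (1/2 + (- BB s 0) * \<theta>^2) ((- AA s 0) * \<theta>)"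
  unfolding XX_def AA1 BB1 ..

lemma XX_sum: "XX s 0 \<theta> + XX s 1 \<theta> = of_real (exp (-(vv s/2) * \<theta>^2))"
proof -
  have "Complex (1/2 + BB s 0 * \<theta>^2) (AA s 0 * \<theta>) + Complex (1/2 + (- BB s 0) * \<theta>^2) ((- AA s 0) * \<theta>) = 1"
    by (simp add: complex_eq_iff)
  then show ?thesis unfolding XX1 unfolding XX_def by (simp add: distrib_left[symmetric])
qed

lemma loc_X:
  fixes \<alpha> \<beta> :: int and a b v \<Delta> \<theta> An Bn w :: real
  assumes "\<alpha> \<in> {-1,0,1}" "\<beta> \<in> {-1,0,1}" "\<bar>a\<bar> \<le> 1/4" "\<bar>b\<bar> \<le> 1/4" "0 \<le> \<Delta>" "\<Delta> \<le> 3/2" "\<bar>\<theta>\<bar> \<le> 4"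
    "0 \<le> v" "w = v + \<Delta>" "An = (of_int \<alpha> + of_int \<beta>)/4"
    "Bn = \<Delta>/4 - (of_int \<alpha> * a - of_int \<beta> * a)/2 - ((of_int \<alpha>)^2 + (of_int \<beta>)^2)/8"
  shows "cmod ((zz \<theta> \<alpha> * (of_real (exp (-(v/2) * \<theta>^2)) * Complex (1/2 + b*\<theta>^2) (a*\<theta>))
      + zz \<theta> \<beta> * (of_real (exp (-(v/2) * \<theta>^2)) * Complex (1/2 + (-b)*\<theta>^2) ((-a)*\<theta>)))/2
      - of_real (exp (-(w/2) * \<theta>^2)) * Complex (1/2 + Bn*\<theta>^2) (An*\<theta>)) \<le> lc \<theta>"
proof -
  define E where "E = exp (-(v/2) * \<theta>^2)"
  define q where "q = exp (-(\<Delta>*\<theta>^2/2))"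
  have Ew: "exp (-(w/2) * \<theta>^2) = E * q"
    unfolding E_def q_def assms(9) by (simp add: exp_add[symmetric] field_simps)
  have q: "\<bar>q - (1 - \<Delta>*\<theta>^2/2)\<bar> \<le> (\<Delta>*\<theta>^2/2)^2"
    unfolding q_def by (rule expm_taylor) (use assms(5) in simp)
  have E0: "0 \<le> E" "E \<le> 1" unfolding E_def using assms(8) by (auto simp: mult_nonneg_nonneg)
  have core: "cmod ((zz \<theta> \<alpha> * Complex (1/2 + b*\<theta>^2) (a*\<theta>) + zz \<theta> \<beta> * Complex (1/2 - b*\<theta>^2) (-a*\<theta>))/2
     - of_real q * Complex (1/2 + (\<Delta>/4 - (of_int \<alpha>*a - of_int \<beta>*a)/2 - ((of_int \<alpha>)^2 + (of_int \<beta>)^2)/8)*\<theta>^2) ((of_int \<alpha> + of_int \<beta>)/4*\<theta>)) \<le> 50 * \<bar>\<theta>\<bar>^3"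
  proof (rule loc_core)
    show "cmod (zz \<theta> \<alpha> - Complex (1 - (of_int \<alpha>)^2*\<theta>^2/2) (of_int \<alpha>*\<theta>)) \<le> \<bar>\<theta>\<bar>^3/3"
      using zz_taylor[OF assms(1)] by simp
    show "cmod (zz \<theta> \<beta> - Complex (1 - (of_int \<beta>)^2*\<theta>^2/2) (of_int \<beta>*\<theta>)) \<le> \<bar>\<theta>\<bar>^3/3"
      using zz_taylor[OF assms(2)] by simp
    show "\<bar>real_of_int \<alpha>\<bar> \<le> 1" using assms(1) by auto
    show "\<bar>real_of_int \<beta>\<bar> \<le> 1" using assms(2) by auto
  qed (use assms q in auto)
  have eq: "(zz \<theta> \<alpha> * (of_real E * Complex (1/2 + b*\<theta>^2) (a*\<theta>))
      + zz \<theta> \<beta> * (of_real E * Complex (1/2 + (-b)*\<theta>^2) ((-a)*\<theta>)))/2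
      - of_real (E * q) * Complex (1/2 + Bn*\<theta>^2) (An*\<theta>) =
     of_real E * ((zz \<theta> \<alpha> * Complex (1/2 + b*\<theta>^2) (a*\<theta>) + zz \<theta> \<beta> * Complex (1/2 - b*\<theta>^2) (-a*\<theta>))/2
     - of_real q * Complex (1/2 + (\<Delta>/4 - (of_int \<alpha>*a - of_int \<beta>*a)/2 - ((of_int \<alpha>)^2 + (of_int \<beta>)^2)/8)*\<theta>^2) ((of_int \<alpha> + of_int \<beta>)/4*\<theta>))"
    unfolding assms(10) assms(11) by (simp add: algebra_simps)
  show ?thesis
    unfolding Ew E_def[symmetric] eq norm_mult norm_of_real lc_def
    using core E0 by (simp add: mult_le_one mult_left_le_one_le order_trans[OF mult_left_le_one_le])
qed

lemma err_gen:
  assumes "Sn = (zz \<theta> \<alpha> * S0 + zz \<theta> \<beta> * S1)/2"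
    and "cmod ((zz \<theta> \<alpha> * X0 + zz \<theta> \<beta> * X1)/2 - Xn) \<le> l"
  shows "cmod (Sn - Xn) \<le> (cmod (S0 - X0) + cmod (S1 - X1))/2 + l"
proof -
  have "Sn - Xn = (zz \<theta> \<alpha> * (S0 - X0) + zz \<theta> \<beta> * (S1 - X1))/2 + ((zz \<theta> \<alpha> * X0 + zz \<theta> \<beta> * X1)/2 - Xn)"
    unfolding assms(1) by (simp add: algebra_simps diff_divide_distrib add_divide_distrib)
  also have "cmod \<dots> \<le> cmod ((zz \<theta> \<alpha> * (S0 - X0) + zz \<theta> \<beta> * (S1 - X1))/2) + cmod ((zz \<theta> \<alpha> * X0 + zz \<theta> \<beta> * X1)/2 - Xn)"
    by (rule norm_triangle_ineq)
  also have "cmod ((zz \<theta> \<alpha> * (S0 - X0) + zz \<theta> \<beta> * (S1 - X1))/2) \<le> (cmod (S0 - X0) + cmod (S1 - X1))/2"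
    using norm_triangle_ineq[of "zz \<theta> \<alpha> * (S0 - X0)" "zz \<theta> \<beta> * (S1 - X1)"] by (simp add: norm_mult)
  finally show ?thesis using assms(2) by simp
qed


definition err :: "nat \<Rightarrow> nat \<Rightarrow> nat \<Rightarrow> real \<Rightarrow> real" where
  "err K s e \<theta> = cmod (SS K s e \<theta> - XX s e \<theta>)"

lemma step_gen:
  fixes \<alpha> \<beta> :: int
  assumes S: "Sn = (zz \<theta> \<alpha> * SS K p 0 \<theta> + zz \<theta> \<beta> * SS K p 1 \<theta>)/2"
    and ab: "\<alpha> \<in> {-1,0,1}" "\<beta> \<in> {-1,0,1}" and D: "0 \<le> \<Delta>" "\<Delta> \<le> 3/2" and th: "\<bar>\<theta>\<bar> \<le> 4"
    and w: "vv s' = vv p + \<Delta>" and An: "AA s' e' = (of_int \<alpha> + of_int \<beta>)/4"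
    and Bn: "BB s' e' = \<Delta>/4 - (of_int \<alpha> * AA p 0 - of_int \<beta> * AA p 0)/2 - ((of_int \<alpha>)^2 + (of_int \<beta>)^2)/8"
  shows "cmod (Sn - XX s' e' \<theta>) \<le> (err K p 0 \<theta> + err K p 1 \<theta>)/2 + lc \<theta>"
proof -
  have "cmod ((zz \<theta> \<alpha> * (of_real (exp (-(vv p/2) * \<theta>^2)) * Complex (1/2 + BB p 0*\<theta>^2) (AA p 0*\<theta>))
      + zz \<theta> \<beta> * (of_real (exp (-(vv p/2) * \<theta>^2)) * Complex (1/2 + (-BB p 0)*\<theta>^2) ((-AA p 0)*\<theta>)))/2
      - of_real (exp (-(vv s'/2) * \<theta>^2)) * Complex (1/2 + BB s' e'*\<theta>^2) (AA s' e'*\<theta>)) \<le> lc \<theta>"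
    by (rule loc_X[OF ab AA_bound BB_bound D th vv_nonneg w An Bn])
  then have "cmod ((zz \<theta> \<alpha> * XX p 0 \<theta> + zz \<theta> \<beta> * XX p 1 \<theta>)/2 - XX s' e' \<theta>) \<le> lc \<theta>"
    unfolding XX1 unfolding XX_def .
  from err_gen[OF S this] show ?thesis unfolding err_def .
qed

lemma exact_gen:
  assumes S: "Sn = (SS K p 0 \<theta> + SS K p 1 \<theta>)/2"
    and w: "vv s' = vv p" and An: "AA s' e' = 0" and Bn: "BB s' e' = 0"
  shows "cmod (Sn - XX s' e' \<theta>) \<le> (err K p 0 \<theta> + err K p 1 \<theta>)/2"
proof -
  have X: "XX s' e' \<theta> = (XX p 0 \<theta> + XX p 1 \<theta>)/2"
    unfolding XX_sum unfolding XX_def w An Bn by (simp add: complex_eq_iff)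
  have e: "Sn - XX s' e' \<theta> = ((SS K p 0 \<theta> - XX p 0 \<theta>) + (SS K p 1 \<theta> - XX p 1 \<theta>))/2"
    unfolding S X by (simp add: diff_divide_distrib add_divide_distrib)
  have "cmod (Sn - XX s' e' \<theta>) = cmod ((SS K p 0 \<theta> - XX p 0 \<theta>) + (SS K p 1 \<theta> - XX p 1 \<theta>)) / 2"
    unfolding e norm_divide by simp
  also have "\<dots> \<le> (cmod (SS K p 0 \<theta> - XX p 0 \<theta>) + cmod (SS K p 1 \<theta> - XX p 1 \<theta>)) / 2"
    by (rule divide_right_mono[OF norm_triangle_ineq]) simp
  finally show ?thesis unfolding err_def .
qed

lemma half_div: "(2 * u) div 2 = u" "(2 * u + 1) div 2 = (u::nat)" by simp_all

lemma err_e0: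
  assumes th: "\<bar>\<theta>\<bar> \<le> 4"
  shows "err (Suc K) (2*u) 0 \<theta> \<le> (err K u 0 \<theta> + err K u 1 \<theta>)/2 + (if even u then 0 else lc \<theta>)"
proof (cases "even u")
  case True
  have "cmod (SS (Suc K) (2*u) 0 \<theta> - XX (2*u) 0 \<theta>) \<le> (err K u 0 \<theta> + err K u 1 \<theta>)/2"
    by (rule exact_gen[OF SS_e0]) (use True in \<open>simp_all add: vv_even AA_def BB_def Bs_def\<close>)
  then show ?thesis using True unfolding err_def by simp
next
  case False
  have "cmod (SS (Suc K) (2*u) 0 \<theta> - XX (2*u) 0 \<theta>) \<le> (err K u 0 \<theta> + err K u 1 \<theta>)/2 + lc \<theta>"
    by (rule step_gen[of _ \<theta> 0 K u 0 1, OF _ _ _ _ _ th])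
       (use False in \<open>simp_all add: SS_e0 vv_even AA_def BB_def Bs_def\<close>)
  then show ?thesis using False unfolding err_def by simp
qed

lemma err_e1:
  assumes th: "\<bar>\<theta>\<bar> \<le> 4"
  shows "err (Suc K) (2*u) 1 \<theta> \<le> (err K u 0 \<theta> + err K u 1 \<theta>)/2 + (if even u then 0 else lc \<theta>)"
proof (cases "even u")
  case True
  have "cmod (SS (Suc K) (2*u) 1 \<theta> - XX (2*u) 1 \<theta>) \<le> (err K u 0 \<theta> + err K u 1 \<theta>)/2"
    by (rule exact_gen) (use True in \<open>simp_all add: SS_e1 SS_e1[simplified] vv_even AA_def BB_def Bs_def\<close>)
  then show ?thesis using True unfolding err_def by simp
next
  case False
  have "cmod (SS (Suc K) (2*u) 1 \<theta> - XX (2*u) 1 \<theta>) \<le> (err K u 0 \<theta> + err K u 1 \<theta>)/2 + lc \<theta>"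
    by (rule step_gen[of _ \<theta> 1 K u "-1" 1, OF _ _ _ _ _ th])
       (use False in \<open>simp_all add: SS_e1 SS_e1[simplified] vv_even AA_def BB_def Bs_def\<close>)
  then show ?thesis using False unfolding err_def by simp
qed

lemma err_o0:
  assumes th: "\<bar>\<theta>\<bar> \<le> 4"
  shows "err (Suc K) (2*u+1) 0 \<theta> \<le> (err K u 0 \<theta> + err K u 1 \<theta>)/2 + lc \<theta>"
proof -
  define \<Delta> where "\<Delta> = vv (2*u+1) - vv u"
  have D: "0 \<le> \<Delta>" "\<Delta> \<le> 3/2" using Delta_odd[of u] unfolding \<Delta>_def by auto
  show ?thesis
  proof (cases "odd u")
    case True
    have "cmod (SS (Suc K) (2*u+1) 0 \<theta> - XX (2*u+1) 0 \<theta>) \<le> (err K u 0 \<theta> + err K u 1 \<theta>)/2 + lc \<theta>"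
      by (rule step_gen[of _ \<theta> 1 K u 0, OF _ _ _ D th])
         (use True in \<open>simp_all add: SS_o0 SS_o0[simplified] \<Delta>_def AA_def BB_def Bs_def\<close>)
    then show ?thesis unfolding err_def .
  next
    case False
    have "cmod (SS (Suc K) (2*u+1) 0 \<theta> - XX (2*u+1) 0 \<theta>) \<le> (err K u 0 \<theta> + err K u 1 \<theta>)/2 + lc \<theta>"
      by (rule step_gen[of _ \<theta> 0 K u 1, OF _ _ _ D th])
         (use False in \<open>simp_all add: SS_o0 SS_o0[simplified] \<Delta>_def AA_def BB_def Bs_def\<close>)
    then show ?thesis unfolding err_def .
  qed
qed

lemma err_o1:
  assumes th: "\<bar>\<theta>\<bar> \<le> 4"
  shows "err (Suc K) (2*u+1) 1 \<theta> \<le> (err K (u+1) 0 \<theta> + err K (u+1) 1 \<theta>)/2 + lc \<theta>"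
proof -
  define \<Delta> where "\<Delta> = vv (2*u+1) - vv (u+1)"
  have D: "0 \<le> \<Delta>" "\<Delta> \<le> 3/2" using Delta_odd'[of u] unfolding \<Delta>_def by auto
  have sum: "vv (2*u+1) - vv u + \<Delta> = 3/2" unfolding \<Delta>_def vv_odd by simp
  have "cmod (SS (Suc K) (2*u+1) 1 \<theta> - XX (2*u+1) 1 \<theta>) \<le> (err K (u+1) 0 \<theta> + err K (u+1) 1 \<theta>)/2 + lc \<theta>"
  proof (rule step_gen[of _ \<theta> 0 K "u+1" "-1", OF _ _ _ D th])
    show "BB (2 * u + 1) 1 = \<Delta> / 4 - (real_of_int 0 * AA (u + 1) 0 - real_of_int (- 1) * AA (u + 1) 0) / 2 -
        ((real_of_int 0)\<^sup>2 + (real_of_int (- 1))\<^sup>2) / 8"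
      using sum by (cases "odd u") (simp_all add: AA_def BB_def Bs_def field_simps)
  qed (simp_all add: SS_o1 SS_o1[simplified] \<Delta>_def AA_def)
  then show ?thesis unfolding err_def .
qed


definition Phi :: "nat \<Rightarrow> nat \<Rightarrow> real \<Rightarrow> real" where
  "Phi K s \<theta> = (if even s then
      max (max (err K s 0 \<theta>) (err K s 1 \<theta>) + 3 * lc \<theta>) (max (err K (s+1) 0 \<theta> + 2 * lc \<theta>) (err K (s+1) 1 \<theta>))
    else max (max (err K (s+1) 0 \<theta>) (err K (s+1) 1 \<theta>) + 3 * lc \<theta>) (max (err K s 1 \<theta> + 2 * lc \<theta>) (err K s 0 \<theta>)))"

lemma Phi_even_ge:
  assumes "even s"
  shows "err K s 0 \<theta> + 3 * lc \<theta> \<le> Phi K s \<theta>" "err K s 1 \<theta> + 3 * lc \<theta> \<le> Phi K s \<theta>"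
    "err K (s+1) 0 \<theta> + 2 * lc \<theta> \<le> Phi K s \<theta>" "err K (s+1) 1 \<theta> \<le> Phi K s \<theta>"
  unfolding Phi_def using assms by auto

lemma Phi_odd_ge:
  assumes "odd s"
  shows "err K (s+1) 0 \<theta> + 3 * lc \<theta> \<le> Phi K s \<theta>" "err K (s+1) 1 \<theta> + 3 * lc \<theta> \<le> Phi K s \<theta>"
    "err K s 1 \<theta> + 2 * lc \<theta> \<le> Phi K s \<theta>" "err K s 0 \<theta> \<le> Phi K s \<theta>"
  unfolding Phi_def using assms by auto

lemma Phi_even_le:
  assumes "even s" "err K s 0 \<theta> + 3 * lc \<theta> \<le> M" "err K s 1 \<theta> + 3 * lc \<theta> \<le> M"
    "err K (s+1) 0 \<theta> + 2 * lc \<theta> \<le> M" "err K (s+1) 1 \<theta> \<le> M"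
  shows "Phi K s \<theta> \<le> M"
  unfolding Phi_def using assms by auto

lemma Phi_odd_le:
  assumes "odd s" "err K (s+1) 0 \<theta> + 3 * lc \<theta> \<le> M" "err K (s+1) 1 \<theta> + 3 * lc \<theta> \<le> M"
    "err K s 1 \<theta> + 2 * lc \<theta> \<le> M" "err K s 0 \<theta> \<le> M"
  shows "Phi K s \<theta> \<le> M"
  unfolding Phi_def using assms by auto

lemma dbl: "(x::real) \<le> (y + z)/2 + c \<Longrightarrow> 2 * x \<le> y + z + 2 * c"
  by (simp add: field_simps)

lemma Phi_step:
  assumes th: "\<bar>\<theta>\<bar> \<le> 4" and b: "b \<le> 1"
  shows "Phi (Suc K) (2 * s + b) \<theta> \<le> Phi K s \<theta> + (if b = s mod 2 then 0 else 4 * lc \<theta>)"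
proof -
  let ?l = "lc \<theta>"
  have l0: "0 \<le> ?l" by (rule lc_nonneg)
  note E0 = dbl[OF err_e0[OF th, of K s]] and E1 = dbl[OF err_e1[OF th, of K s]]
  note O0 = dbl[OF err_o0[OF th, of K s]] and O1 = dbl[OF err_o1[OF th, of K s]]
  note F0 = dbl[OF err_e0[OF th, of K "s+1"]] and F1 = dbl[OF err_e1[OF th, of K "s+1"]]
  have ss: "2 * (s + 1) = 2 * s + 1 + 1" by simp
  consider "b = 0" "even s" | "b = 0" "odd s" | "b = 1" "even s" | "b = 1" "odd s" using b by force
  then show ?thesis
  proof cases
    case 1
    have ge: "err K s 0 \<theta> + 3 * ?l \<le> Phi K s \<theta>" "err K s 1 \<theta> + 3 * ?l \<le> Phi K s \<theta>"
      "err K (s+1) 0 \<theta> + 2 * ?l \<le> Phi K s \<theta>" "err K (s+1) 1 \<theta> \<le> Phi K s \<theta>"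
      using Phi_even_ge[OF 1(2)] by auto
    have "Phi (Suc K) (2 * s) \<theta> \<le> Phi K s \<theta>"
      by (rule Phi_even_le) (use 1 E0 E1 O0 O1 ge l0 in auto)
    then show ?thesis using 1 by simp
  next
    case 2
    have ge: "err K (s+1) 0 \<theta> + 3 * ?l \<le> Phi K s \<theta>" "err K (s+1) 1 \<theta> + 3 * ?l \<le> Phi K s \<theta>"
      "err K s 1 \<theta> + 2 * ?l \<le> Phi K s \<theta>" "err K s 0 \<theta> \<le> Phi K s \<theta>"
      using Phi_odd_ge[OF 2(2)] by auto
    have "Phi (Suc K) (2 * s) \<theta> \<le> Phi K s \<theta> + 4 * ?l"
      by (rule Phi_even_le) (use 2 E0 E1 O0 O1 ge l0 in auto)
    then show ?thesis using 2 by (simp add: odd_iff_mod_2_eq_one)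
  next
    case 3
    have ge: "err K s 0 \<theta> + 3 * ?l \<le> Phi K s \<theta>" "err K s 1 \<theta> + 3 * ?l \<le> Phi K s \<theta>"
      "err K (s+1) 0 \<theta> + 2 * ?l \<le> Phi K s \<theta>" "err K (s+1) 1 \<theta> \<le> Phi K s \<theta>"
      using Phi_even_ge[OF 3(2)] by auto
    have "Phi (Suc K) (2 * s + 1) \<theta> \<le> Phi K s \<theta> + 4 * ?l"
      by (rule Phi_odd_le) (use 3 O0 O1 F0 F1 ge l0 ss in auto)
    then show ?thesis using 3 by simp
  next
    case 4
    have ge: "err K (s+1) 0 \<theta> + 3 * ?l \<le> Phi K s \<theta>" "err K (s+1) 1 \<theta> + 3 * ?l \<le> Phi K s \<theta>"
      "err K s 1 \<theta> + 2 * ?l \<le> Phi K s \<theta>" "err K s 0 \<theta> \<le> Phi K s \<theta>"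
      using Phi_odd_ge[OF 4(2)] by auto
    have "Phi (Suc K) (2 * s + 1) \<theta> \<le> Phi K s \<theta>"
      by (rule Phi_odd_le) (use 4 O0 O1 F0 F1 ge l0 ss in auto)
    then show ?thesis using 4 by (simp add: odd_iff_mod_2_eq_one)
  qed
qed


lemma SS_norm: "cmod (SS K t e \<theta>) \<le> 1"
proof -
  have fin: "finite {n::nat. n < 2 ^ K \<and> n mod 2 = e}" by auto
  have "cmod (\<Sum>n | n < 2 ^ K \<and> n mod 2 = e. zz \<theta> (dd t n)) \<le> (\<Sum>n | n < 2 ^ K \<and> n mod 2 = e. cmod (zz \<theta> (dd t n)))"
    by (rule norm_sum)
  also have "\<dots> = real (card {n::nat. n < 2 ^ K \<and> n mod 2 = e})" by simp
  also have "card {n::nat. n < 2 ^ K \<and> n mod 2 = e} \<le> card {..<(2::nat) ^ K}"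
    by (rule card_mono) auto
  finally have "cmod (\<Sum>n | n < 2 ^ K \<and> n mod 2 = e. zz \<theta> (dd t n)) \<le> 2 ^ K" by simp
  then have "cmod (\<Sum>n | n < 2 ^ K \<and> n mod 2 = e. zz \<theta> (dd t n)) / 2 ^ K \<le> 2 ^ K / 2 ^ K"
    by (rule divide_right_mono) simp
  moreover have "cmod ((2::complex) ^ K) = 2 ^ K" by (simp add: norm_power)
  ultimately show ?thesis unfolding SS_def norm_divide by simp
qed

lemma XX_norm:
  assumes "\<bar>\<theta>\<bar> \<le> 4"
  shows "cmod (XX s e \<theta>) \<le> 6"
proof -
  have E: "\<bar>exp (-(vv s/2) * \<theta>^2)\<bar> \<le> 1" using vv_nonneg[of s] by (simp add: mult_nonneg_nonneg)
  have th2: "\<theta>^2 \<le> 16"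
  proof -
    have "\<bar>\<theta>\<bar>^2 \<le> 4^2" by (rule power_mono[OF assms]) simp
    then show ?thesis by simp
  qed
  have "cmod (Complex (1/2 + BB s e * \<theta>^2) (AA s e * \<theta>)) \<le> 1/2 + 1/4*16 + 1/4*4"
  proof (rule lin_P)
    show "cmod (Complex (1/2 + BB s e * \<theta>^2) (AA s e * \<theta>)) \<le> \<bar>1/2 + BB s e * \<theta>^2\<bar> + \<bar>AA s e * \<theta>\<bar>"
      using cmod_le[of "Complex (1/2 + BB s e * \<theta>^2) (AA s e * \<theta>)"] by simp
    show "\<bar>BB s e * \<theta>^2\<bar> \<le> 1/4*16" using abs_mult_le[OF BB_bound, of "\<theta>^2" 16] th2 by simp
    show "\<bar>AA s e * \<theta>\<bar> \<le> 1/4*4" using abs_mult_le[OF AA_bound assms] .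
  qed
  then have "cmod (of_real (exp (-(vv s/2) * \<theta>^2)) * Complex (1/2 + BB s e * \<theta>^2) (AA s e * \<theta>)) \<le> 1 * 6"
    unfolding norm_mult norm_of_real by (intro mult_mono E) auto
  then show ?thesis unfolding XX_def by simp
qed

lemma XX0: "XX 0 e \<theta> = 1/2"
  unfolding XX_def AA_def BB_def Bs_def by (simp add: complex_eq_iff)

lemma err_base0: "e \<le> 1 \<Longrightarrow> err (Suc K) 0 e \<theta> = 0"
  unfolding err_def by (simp add: SS_zero XX0)

lemma err_base10:
  assumes th: "\<bar>\<theta>\<bar> \<le> 4"
  shows "err (Suc (Suc K)) 1 0 \<theta> \<le> lc \<theta>"
  using err_o0[OF th, of "Suc K" 0] err_base0[of 0 K \<theta>] err_base0[of 1 K \<theta>] by simp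

lemma err_base11:
  assumes th: "\<bar>\<theta>\<bar> \<le> 4"
  shows "err (Suc (Suc K)) 1 1 \<theta> \<le> 3 * lc \<theta> + 28 / 2 ^ (Suc (Suc K))"
proof (induction K)
  case 0
  have "err 2 1 1 \<theta> \<le> cmod (SS 2 1 1 \<theta>) + cmod (XX 1 1 \<theta>)"
    unfolding err_def by (rule norm_triangle_ineq4)
  also have "\<dots> \<le> 1 + 6" using SS_norm XX_norm[OF th] by (intro add_mono) auto
  finally show ?case using lc_nonneg[of \<theta>] by (simp add: numeral_2_eq_2)
next
  case (Suc K)
  have "err (Suc (Suc (Suc K))) 1 1 \<theta> \<le> (err (Suc (Suc K)) 1 0 \<theta> + err (Suc (Suc K)) 1 1 \<theta>)/2 + lc \<theta>"
    using err_o1[OF th, of "Suc (Suc K)" 0] by simp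
  also have "\<dots> \<le> (lc \<theta> + (3 * lc \<theta> + 28 / 2 ^ (Suc (Suc K))))/2 + lc \<theta>"
    using err_base10[OF th, of K] Suc.IH by (intro add_mono divide_right_mono) auto
  also have "\<dots> = 3 * lc \<theta> + 28 / 2 ^ (Suc (Suc (Suc K)))" by (simp add: field_simps)
  finally show ?case .
qed

lemma Phi_base:
  assumes th: "\<bar>\<theta>\<bar> \<le> 4"
  shows "Phi (Suc (Suc K)) 0 \<theta> \<le> 3 * lc \<theta> + 28 / 2 ^ (Suc (Suc K))"
proof (rule Phi_even_le)
  have p: "0 \<le> 28 / (2::real) ^ (Suc (Suc K))" by simp
  have l: "0 \<le> lc \<theta>" by (rule lc_nonneg)
  show "err (Suc (Suc K)) 0 0 \<theta> + 3 * lc \<theta> \<le> 3 * lc \<theta> + 28 / 2 ^ Suc (Suc K)"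
    using err_base0[of 0 "Suc K" \<theta>] p by simp
  show "err (Suc (Suc K)) 0 1 \<theta> + 3 * lc \<theta> \<le> 3 * lc \<theta> + 28 / 2 ^ Suc (Suc K)"
    using err_base0[of 1 "Suc K" \<theta>] p by simp
  have "err (Suc (Suc K)) (0 + 1) 0 \<theta> \<le> lc \<theta>" using err_base10[OF th, of K] by simp
  then show "err (Suc (Suc K)) (0 + 1) 0 \<theta> + 2 * lc \<theta> \<le> 3 * lc \<theta> + 28 / 2 ^ Suc (Suc K)"
    using p l by linarith
  show "err (Suc (Suc K)) (0 + 1) 1 \<theta> \<le> 3 * lc \<theta> + 28 / 2 ^ Suc (Suc K)"
    using err_base11[OF th, of K] by simp
qed simp

fun blen :: "nat \<Rightarrow> nat" where
  "blen n = (if n = 0 then 0 else Suc (blen (n div 2)))"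

fun chg :: "nat \<Rightarrow> nat" where
  "chg n = (if n = 0 then 0 else chg (n div 2) + (if n mod 2 = (n div 2) mod 2 then 0 else 1))"

declare blen.simps[simp del] chg.simps[simp del]

lemma chg_blocks: "chg n + n mod 2 \<le> 2 * blocks01 n"
proof (induction n rule: less_induct)
  case (less n)
  show ?case
  proof (cases "n = 0")
    case True then show ?thesis by (simp add: chg.simps)
  next
    case False
    have IH: "chg (n div 2) + (n div 2) mod 2 \<le> 2 * blocks01 (n div 2)"
      using less[of "n div 2"] False by simp
    have c: "chg n = chg (n div 2) + (if n mod 2 = (n div 2) mod 2 then 0 else 1)"
      using False by (simp add: chg.simps[of n])
    have b: "blocks01 n = (if n mod 4 = 1 then 1 else 0) + blocks01 (n div 2)"
      using False by (simp add: blocks01.simps[of n])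
    have m4: "n mod 4 = 1 \<longleftrightarrow> n mod 2 = 1 \<and> (n div 2) mod 2 = 0" by presburger
    have "n mod 2 = 0 \<or> n mod 2 = 1" "(n div 2) mod 2 = 0 \<or> (n div 2) mod 2 = 1" by auto
    then show ?thesis using IH c b m4 by auto
  qed
qed

lemma Phi_main:
  assumes th: "\<bar>\<theta>\<bar> \<le> 4"
  shows "Phi (Suc (Suc J) + blen t) t \<theta> \<le> 3 * lc \<theta> + 28 / 2 ^ (Suc (Suc J)) + 4 * lc \<theta> * chg t"
proof (induction t rule: less_induct)
  case (less t)
  show ?case
  proof (cases "t = 0")
    case True
    then show ?thesis using Phi_base[OF th, of J] by (simp add: blen.simps chg.simps)
  next
    case False
    define s where "s = t div 2"
    define b where "b = t mod 2"
    have t: "t = 2 * s + b" unfolding s_def b_def by simp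
    have b1: "b \<le> 1" unfolding b_def by simp
    have IH: "Phi (Suc (Suc J) + blen s) s \<theta> \<le> 3 * lc \<theta> + 28 / 2 ^ (Suc (Suc J)) + 4 * lc \<theta> * chg s"
      using less[of s] False unfolding s_def by simp
    have bl: "Suc (Suc J) + blen t = Suc (Suc (Suc J) + blen s)"
      using False by (simp add: blen.simps[of t] s_def)
    have ch: "chg t = chg s + (if b = s mod 2 then 0 else 1)"
      using False by (simp add: chg.simps[of t] s_def b_def)
    have "Phi (Suc (Suc (Suc J) + blen s)) (2 * s + b) \<theta> \<le> Phi (Suc (Suc J) + blen s) s \<theta> + (if b = s mod 2 then 0 else 4 * lc \<theta>)"
      by (rule Phi_step[OF th b1])
    moreover have "Phi (Suc (Suc J) + blen t) t \<theta> = Phi (Suc (Suc (Suc J) + blen s)) (2 * s + b) \<theta>"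
      using bl t by simp
    ultimately have "Phi (Suc (Suc J) + blen t) t \<theta> \<le> Phi (Suc (Suc J) + blen s) s \<theta> + (if b = s mod 2 then 0 else 4 * lc \<theta>)"
      by simp
    also have "\<dots> \<le> 3 * lc \<theta> + 28 / 2 ^ (Suc (Suc J)) + 4 * lc \<theta> * chg s + (if b = s mod 2 then 0 else 4 * lc \<theta>)"
      using IH by simp
    also have "\<dots> = 3 * lc \<theta> + 28 / 2 ^ (Suc (Suc J)) + 4 * lc \<theta> * chg t"
      unfolding ch by (simp add: algebra_simps)
    finally show ?thesis .
  qed
qed

lemma SS_total_bound:
  assumes th: "\<bar>\<theta>\<bar> \<le> 4"
  shows "cmod (SS K t 0 \<theta> + SS K t 1 \<theta> - of_real (exp (-(vv t/2) * \<theta>^2))) \<le> 2 * Phi K t \<theta>"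
proof -
  have l: "0 \<le> lc \<theta>" by (rule lc_nonneg)
  have a: "err K t 0 \<theta> \<le> Phi K t \<theta>" "err K t 1 \<theta> \<le> Phi K t \<theta>"
    using Phi_even_ge[of t K \<theta>] Phi_odd_ge[of t K \<theta>] l by (cases "even t"; auto)+
  have e: "SS K t 0 \<theta> + SS K t 1 \<theta> - of_real (exp (-(vv t/2) * \<theta>^2)) = (SS K t 0 \<theta> - XX t 0 \<theta>) + (SS K t 1 \<theta> - XX t 1 \<theta>)"
    unfolding XX_sum[symmetric] by simp
  have "cmod (SS K t 0 \<theta> + SS K t 1 \<theta> - of_real (exp (-(vv t/2) * \<theta>^2))) \<le> err K t 0 \<theta> + err K t 1 \<theta>"
    unfolding err_def e by (rule norm_triangle_ineq)
  then show ?thesis using a by simp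
qed


definition good :: "nat \<Rightarrow> nat \<Rightarrow> nat \<Rightarrow> bool" where
  "good K t s \<longleftrightarrow> s + t < 2 ^ K \<and> (s < 2 ^ (K - 1) \<longleftrightarrow> s + t < 2 ^ (K - 1))"

definition Gd :: "nat \<Rightarrow> nat \<Rightarrow> int \<Rightarrow> nat set" where
  "Gd K t k = {s. s < 2 ^ K \<and> good K t s \<and> dd t s = k}"

definition Bd :: "nat \<Rightarrow> nat \<Rightarrow> nat set" where
  "Bd K t = {s. s < 2 ^ K \<and> \<not> good K t s}"

definition Dc :: "nat \<Rightarrow> nat \<Rightarrow> int \<Rightarrow> nat" where
  "Dc t M k = card {n. n < M \<and> dd t n = k}"

lemma dd_mod:
  assumes "1 \<le> K" "good K t (n mod 2 ^ K)"
  shows "dd t n = dd t (n mod 2 ^ K)"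
proof -
  have "n = 2 ^ K * (n div 2 ^ K) + n mod 2 ^ K" by simp
  then have "dd t n = dd t (2 ^ K * (n div 2 ^ K) + n mod 2 ^ K)" by simp
  also have "\<dots> = dd t (n mod 2 ^ K)"
    by (rule dd_period) (use assms in \<open>auto simp: good_def\<close>)
  finally show ?thesis .
qed

lemma card_Bd: "card (Bd K t) \<le> 2 * t"
proof -
  have "Bd K t \<subseteq> {2 ^ (K - 1) - t ..< 2 ^ (K - 1)} \<union> {2 ^ K - t ..< 2 ^ K}"
    unfolding Bd_def good_def by auto
  then have "card (Bd K t) \<le> card ({2 ^ (K - 1) - t ..< 2 ^ (K - 1)} \<union> {2 ^ K - t ..< (2::nat) ^ K})"
    by (intro card_mono) auto
  also have "\<dots> \<le> card {2 ^ (K - 1) - t ..< (2::nat) ^ (K - 1)} + card {2 ^ K - t ..< (2::nat) ^ K}"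
    by (rule card_Un_le)
  also have "\<dots> \<le> t + t" by (intro add_mono) auto
  finally show ?thesis by simp
qed

lemma card_period:
  assumes "A \<subseteq> {..<p}"
  shows "card {n::nat. n < Q * p \<and> n mod p \<in> A} = Q * card A"
proof (induction Q)
  case 0 then show ?case by simp
next
  case (Suc Q)
  have fA: "finite A" using assms finite_subset by blast
  have eq: "{n. n < Suc Q * p \<and> n mod p \<in> A} = {n. n < Q * p \<and> n mod p \<in> A} \<union> (\<lambda>s. Q * p + s) ` A"
  proof (rule set_eqI, rule iffI)
    fix n assume n: "n \<in> {n. n < Suc Q * p \<and> n mod p \<in> A}"
    show "n \<in> {n. n < Q * p \<and> n mod p \<in> A} \<union> (\<lambda>s. Q * p + s) ` A"
    proof (cases "n < Q * p")
      case True then show ?thesis using n by auto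
    next
      case False
      then have "n div p = Q" using n by (simp add: div_nat_eqI mult.commute)
      then have "n = Q * p + n mod p" by (metis div_mult_mod_eq)
      then show ?thesis using n by blast
    qed
  next
    fix n assume "n \<in> {n. n < Q * p \<and> n mod p \<in> A} \<union> (\<lambda>s. Q * p + s) ` A"
    then show "n \<in> {n. n < Suc Q * p \<and> n mod p \<in> A}"
    proof
      assume "n \<in> {n. n < Q * p \<and> n mod p \<in> A}" then show ?thesis by auto
    next
      assume "n \<in> (\<lambda>s. Q * p + s) ` A"
      then obtain s where s: "s \<in> A" "n = Q * p + s" by auto
      have "s < p" using s assms by auto
      then show ?thesis using s by auto
    qed
  qed
  have disj: "{n. n < Q * p \<and> n mod p \<in> A} \<inter> (\<lambda>s. Q * p + s) ` A = {}" by auto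
  have "card {n. n < Suc Q * p \<and> n mod p \<in> A} = card {n. n < Q * p \<and> n mod p \<in> A} + card ((\<lambda>s. Q * p + s) ` A)"
    unfolding eq by (rule card_Un_disjoint) (use fA disj in auto)
  also have "card ((\<lambda>s. Q * p + s) ` A) = card A" by (rule card_image) (auto simp: inj_on_def)
  finally show ?case using Suc.IH by simp
qed

lemma Dc_lower:
  assumes "1 \<le> K"
  shows "(M div 2 ^ K) * card (Gd K t k) \<le> Dc t M k"
proof -
  have "(M div 2 ^ K) * card (Gd K t k) = card {n. n < (M div 2 ^ K) * 2 ^ K \<and> n mod 2 ^ K \<in> Gd K t k}"
    by (rule card_period[symmetric]) (auto simp: Gd_def)
  also have "\<dots> \<le> Dc t M k" unfolding Dc_def
  proof (rule card_mono)
    show "finite {n. n < M \<and> dd t n = k}" by auto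
    show "{n. n < M div 2 ^ K * 2 ^ K \<and> n mod 2 ^ K \<in> Gd K t k} \<subseteq> {n. n < M \<and> dd t n = k}"
    proof
      fix n assume n: "n \<in> {n. n < M div 2 ^ K * 2 ^ K \<and> n mod 2 ^ K \<in> Gd K t k}"
      have "M div 2 ^ K * 2 ^ K \<le> M" by simp
      moreover have "n < M div 2 ^ K * 2 ^ K" using n by simp
      ultimately have "n < M" by (rule_tac less_le_trans) auto
      moreover have "dd t n = k" using n dd_mod[OF assms, of t n] unfolding Gd_def by auto
      ultimately show "n \<in> {n. n < M \<and> dd t n = k}" by simp
    qed
  qed
  finally show ?thesis .
qed

lemma GB_disj: "Gd K t k \<inter> Bd K t = {}" unfolding Gd_def Bd_def by auto

lemma Dc_upper:
  assumes "1 \<le> K"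
  shows "Dc t M k \<le> (M div 2 ^ K + 1) * (card (Gd K t k) + card (Bd K t))"
proof -
  have "Dc t M k \<le> card {n. n < (M div 2 ^ K + 1) * 2 ^ K \<and> n mod 2 ^ K \<in> Gd K t k \<union> Bd K t}"
    unfolding Dc_def
  proof (rule card_mono)
    show "finite {n. n < (M div 2 ^ K + 1) * 2 ^ K \<and> n mod 2 ^ K \<in> Gd K t k \<union> Bd K t}" by auto
    show "{n. n < M \<and> dd t n = k} \<subseteq> {n. n < (M div 2 ^ K + 1) * 2 ^ K \<and> n mod 2 ^ K \<in> Gd K t k \<union> Bd K t}"
    proof
      fix n assume n: "n \<in> {n. n < M \<and> dd t n = k}"
      have "M < (M div 2 ^ K + 1) * 2 ^ K"
        by (metis add.commute div_mult_mod_eq mod_less_divisor mult.commute nat_add_left_cancel_less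
            nat_zero_less_power_iff pos2 distrib_left mult_1_right)
      then have "n < (M div 2 ^ K + 1) * 2 ^ K" using n by simp
      moreover have "n mod 2 ^ K \<in> Gd K t k \<union> Bd K t"
      proof (cases "good K t (n mod 2 ^ K)")
        case True
        then have "dd t (n mod 2 ^ K) = k" using dd_mod[OF assms True] n by simp
        then show ?thesis using True unfolding Gd_def by simp
      next
        case False then show ?thesis unfolding Bd_def by simp
      qed
      ultimately show "n \<in> {n. n < (M div 2 ^ K + 1) * 2 ^ K \<and> n mod 2 ^ K \<in> Gd K t k \<union> Bd K t}" by simp
    qed
  qed
  also have "\<dots> = (M div 2 ^ K + 1) * card (Gd K t k \<union> Bd K t)"
    by (rule card_period) (auto simp: Gd_def Bd_def)
  also have "card (Gd K t k \<union> Bd K t) = card (Gd K t k) + card (Bd K t)"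
    by (rule card_Un_disjoint) (auto simp: Gd_def Bd_def)
  finally show ?thesis .
qed

lemma GB_le: "card (Gd K t k) + card (Bd K t) \<le> 2 ^ K"
proof -
  have "card (Gd K t k) + card (Bd K t) = card (Gd K t k \<union> Bd K t)"
    by (rule card_Un_disjoint[symmetric]) (auto simp: Gd_def Bd_def)
  also have "\<dots> \<le> card {..<(2::nat) ^ K}" by (rule card_mono) (auto simp: Gd_def Bd_def)
  finally show ?thesis by simp
qed


lemma f_bounds:
  assumes K: "1 \<le> K" and M: "0 < M"
  shows "real (card (Gd K t k)) / 2^K - 2^K / real M \<le> real (Dc t M k) / real M"
    and "real (Dc t M k) / real M \<le> (real (card (Gd K t k)) + real (card (Bd K t))) / 2^K + 2^K / real M"
proof -
  define p :: real where "p = 2^K"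
  define x :: real where "x = real (M div 2^K)"
  define c :: real where "c = real (card (Gd K t k))"
  define b :: real where "b = real (card (Bd K t))"
  define D :: real where "D = real (Dc t M k)"
  have p0: "0 < p" unfolding p_def by simp
  have M0: "0 < real M" using M by simp
  have A1: "x * p \<le> real M"
  proof -
    have "M div 2^K * 2^K \<le> M" by simp
    then have "real (M div 2^K * 2^K) \<le> real M" by (rule of_nat_mono)
    then show ?thesis unfolding x_def p_def by simp
  qed
  have A2: "real M \<le> (x + 1) * p"
  proof -
    have "M < (M div 2 ^ K + 1) * 2 ^ K"
      by (metis add.commute div_mult_mod_eq mod_less_divisor mult.commute nat_add_left_cancel_less
          nat_zero_less_power_iff pos2 distrib_left mult_1_right)
    then have "M \<le> (M div 2 ^ K + 1) * 2 ^ K" by (rule less_imp_le)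
    then have "real M \<le> real ((M div 2 ^ K + 1) * 2 ^ K)" by (rule of_nat_mono)
    then show ?thesis unfolding x_def p_def by (simp only: of_nat_mult of_nat_add of_nat_power of_nat_numeral of_nat_1)
  qed
  have B1: "x * c \<le> D"
  proof -
    have "real (M div 2 ^ K * card (Gd K t k)) \<le> real (Dc t M k)" using Dc_lower[OF K] of_nat_mono by blast
    then show ?thesis unfolding x_def c_def D_def by simp
  qed
  have B2: "D \<le> (x + 1) * (c + b)"
  proof -
    have "real (Dc t M k) \<le> real ((M div 2 ^ K + 1) * (card (Gd K t k) + card (Bd K t)))"
      using Dc_upper[OF K] of_nat_mono by blast
    then show ?thesis unfolding x_def c_def b_def D_def by (simp only: of_nat_mult of_nat_add of_nat_1)
  qed
  have B3: "c + b \<le> p"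
  proof -
    have "real (card (Gd K t k) + card (Bd K t)) \<le> real ((2::nat) ^ K)" using GB_le of_nat_mono by blast
    then show ?thesis unfolding c_def b_def p_def by simp
  qed
  have c0: "0 \<le> c" "0 \<le> b" unfolding c_def b_def by auto
  have cp: "c \<le> p" using B3 c0 by linarith
  have x1: "real M / p - 1 \<le> x" using A2 p0 by (simp add: divide_le_eq algebra_simps)
  have x2: "x \<le> real M / p" using A1 p0 by (simp add: le_divide_eq)
  have "(real M / p - 1) * c \<le> x * c" by (rule mult_right_mono[OF x1 c0(1)])
  also have "\<dots> \<le> D" by (rule B1)
  finally have L1: "real M * c / p - c \<le> D" by (simp add: algebra_simps)
  have L2: "real M * c / p - p \<le> D" using L1 cp by linarith
  have "(real M * c / p - p) / real M \<le> D / real M" by (rule divide_right_mono[OF L2]) simp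
  moreover have "(real M * c / p - p) / real M = c / p - p / real M" using M0 p0 by (simp add: field_simps)
  ultimately show "real (card (Gd K t k)) / 2^K - 2^K / real M \<le> real (Dc t M k) / real M"
    unfolding c_def p_def D_def by simp
  have "(x + 1) * (c + b) \<le> (real M / p + 1) * (c + b)" by (rule mult_right_mono) (use x2 c0 in auto)
  then have U1: "D \<le> real M * (c + b) / p + (c + b)" using B2 by (simp add: algebra_simps)
  have U2: "D \<le> real M * (c + b) / p + p" using U1 B3 by linarith
  have "D / real M \<le> (real M * (c + b) / p + p) / real M" by (rule divide_right_mono[OF U2]) simp
  moreover have "(real M * (c + b) / p + p) / real M = (c + b) / p + p / real M" using M0 p0 by (simp add: field_simps)
  ultimately show "real (Dc t M k) / real M \<le> (real (card (Gd K t k)) + real (card (Bd K t))) / 2^K + 2^K / real M"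
    unfolding c_def b_def p_def D_def by simp
qed

lemma exists_K:
  assumes "0 < e"
  shows "\<exists>K\<ge>1. 2 * real t / 2^K < e"
proof -
  obtain n :: nat where n: "2 * real t / e < real n" using reals_Archimedean2 by blast
  have "real n < 2 ^ Suc n"
  proof -
    have "n < 2 ^ n" by (rule less_exp)
    also have "(2::nat) ^ n < 2 ^ Suc n" by simp
    finally have "real n < real ((2::nat) ^ Suc n)" by (simp only: of_nat_less_iff)
    then show ?thesis by simp
  qed
  then have "2 * real t / e < 2 ^ Suc n" using n by linarith
  then have "2 * real t < e * 2 ^ Suc n" using assms by (simp add: divide_less_eq mult.commute)
  then have "2 * real t / 2 ^ Suc n < e" by (simp add: divide_less_eq mult.commute)
  then show ?thesis by (intro exI[of _ "Suc n"]) auto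
qed

lemma exists_M:
  assumes "0 < e" and that: "0 \<le> P"
  shows "\<exists>M0>0. \<forall>M\<ge>M0. (P::real) / real M < e"
proof -
  obtain n :: nat where n: "P / e < real n" using reals_Archimedean2 by blast
  have "0 \<le> P / e" using that assms by simp
  then have "0 < real n" using n by linarith
  then have n0: "0 < n" by simp
  have "\<forall>M\<ge>n. P / real M < e"
  proof (intro allI impI)
    fix M assume M: "n \<le> M"
    have "P / e < real M" using n M by (meson of_nat_le_iff order.strict_trans2)
    then have "P < e * real M" using assms by (simp add: divide_less_eq mult.commute)
    moreover have "0 < real M" using M n0 by simp
    ultimately show "P / real M < e" by (simp add: divide_less_eq mult.commute)
  qed
  then show ?thesis using n0 by blast
qed

lemma Dc_conv: "convergent (\<lambda>M. real (Dc t M k) / real M)"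
proof -
  have "Cauchy (\<lambda>M. real (Dc t M k) / real M)"
  proof (rule CauchyI)
    fix e :: real assume e: "0 < e"
    obtain K where K: "1 \<le> K" "2 * real t / 2^K < e/3" using exists_K[of "e/3" t] e by auto
    obtain M0 where M0: "0 < M0" "\<forall>M\<ge>M0. 2^K / real M < e/3"
      using exists_M[of "e/3" "2^K"] e by auto
    define c where "c = real (card (Gd K t k)) / 2^K"
    define b where "b = real (card (Bd K t)) / 2^K"
    have b: "b < e/3"
    proof -
      have "real (card (Bd K t)) \<le> 2 * real t" using card_Bd[of K t] by (metis of_nat_le_iff of_nat_mult of_nat_numeral)
      then have "b \<le> 2 * real t / 2^K" unfolding b_def by (simp add: divide_right_mono)
      then show ?thesis using K by linarith
    qed
    have bnd: "c - e/3 < real (Dc t M k) / real M \<and> real (Dc t M k) / real M < c + b + e/3" if "M0 \<le> M" for M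
    proof -
      have M: "0 < M" using that M0 by simp
      have q: "2^K / real M < e/3" using M0 that by auto
      have "c - 2^K / real M \<le> real (Dc t M k) / real M" using f_bounds(1)[OF K(1) M] unfolding c_def .
      moreover have "real (Dc t M k) / real M \<le> c + b + 2^K / real M"
        using f_bounds(2)[OF K(1) M, of t k] unfolding c_def b_def by (simp add: add_divide_distrib)
      ultimately show ?thesis using q by linarith
    qed
    show "\<exists>M. \<forall>m\<ge>M. \<forall>n\<ge>M. norm (real (Dc t m k) / real m - real (Dc t n k) / real n) < e"
    proof (intro exI allI impI)
      fix m n assume m: "M0 \<le> m" and n: "M0 \<le> n"
      show "norm (real (Dc t m k) / real m - real (Dc t n k) / real n) < e"
        using bnd[OF m] bnd[OF n] b unfolding real_norm_def abs_less_iff by linarith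
    qed
  qed
  then show ?thesis by (simp add: Cauchy_convergent_iff)
qed

lemma cdens_eq: "cdens t k = lim (\<lambda>M. real (Dc t M k) / real M)"
  unfolding cdens_def Dc_def ..

lemma cdens_tendsto: "(\<lambda>M. real (Dc t M k) / real M) \<longlonglongrightarrow> cdens t k"
  unfolding cdens_eq using Dc_conv convergent_LIMSEQ_iff by blast

lemma cdens_lower:
  assumes K: "1 \<le> K"
  shows "real (card (Gd K t k)) / 2^K \<le> cdens t k"
proof (rule LIMSEQ_le[OF _ cdens_tendsto])
  show "(\<lambda>M. real (card (Gd K t k)) / 2^K - 2^K / real M) \<longlonglongrightarrow> real (card (Gd K t k)) / 2^K"
    using tendsto_diff[OF tendsto_const lim_const_over_n[of "2^K"]] by simp
  show "\<exists>N. \<forall>n\<ge>N. real (card (Gd K t k)) / 2^K - 2^K / real n \<le> real (Dc t n k) / real n"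
    using f_bounds(1)[OF K] by (intro exI[of _ 1]) auto
qed

lemma cdens_nonneg: "0 \<le> cdens t k"
proof -
  have "0 \<le> real (card (Gd 1 t k)) / 2^1" by (simp add: zero_le_divide_iff)
  also have "\<dots> \<le> cdens t k" by (rule cdens_lower) simp
  finally show ?thesis .
qed

lemma cdens_sum_le:
  assumes "finite F"
  shows "(\<Sum>k\<in>F. cdens t k) \<le> 1"
proof (rule LIMSEQ_le_const2)
  show "(\<lambda>M. \<Sum>k\<in>F. real (Dc t M k) / real M) \<longlonglongrightarrow> (\<Sum>k\<in>F. cdens t k)"
    by (rule tendsto_sum) (rule cdens_tendsto)
  show "\<exists>N. \<forall>M\<ge>N. (\<Sum>k\<in>F. real (Dc t M k) / real M) \<le> 1"
  proof (intro exI allI impI)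
    fix M :: nat assume M: "1 \<le> M"
    let ?S = "{n. n < M \<and> dd t n \<in> F}"
    have "(\<Sum>k\<in>F. Dc t M k) = (\<Sum>k\<in>F. \<Sum>n | n \<in> ?S \<and> dd t n = k. (1::nat))"
    proof (rule sum.cong[OF refl])
      fix k assume k: "k \<in> F"
      have "{n. n \<in> ?S \<and> dd t n = k} = {n. n < M \<and> dd t n = k}" using k by auto
      then show "Dc t M k = (\<Sum>n | n \<in> ?S \<and> dd t n = k. (1::nat))" unfolding Dc_def by simp
    qed
    also have "\<dots> = (\<Sum>n\<in>?S. (1::nat))"
      by (rule sum.group) (use assms in auto)
    also have "\<dots> = card ?S" by simp
    also have "card ?S \<le> card {..<M}" by (rule card_mono) auto
    finally have "(\<Sum>k\<in>F. Dc t M k) \<le> M" by simp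
    then have "real (\<Sum>k\<in>F. Dc t M k) \<le> real M" by (rule of_nat_mono)
    then have "(\<Sum>k\<in>F. real (Dc t M k)) / real M \<le> real M / real M" by (simp add: divide_right_mono)
    also have "\<dots> = 1" using M by simp
    finally show "(\<Sum>k\<in>F. real (Dc t M k) / real M) \<le> 1" by (simp add: sum_divide_distrib)
  qed
qed


lemma summable_diff':
  fixes f g :: "'a \<Rightarrow> 'b::{topological_ab_group_add}"
  assumes "f summable_on A" "g summable_on A"
  shows "(\<lambda>x. f x - g x) summable_on A"
proof -
  have "(\<lambda>x. - g x) summable_on A" using assms(2) summable_on_uminus by blast
  from summable_on_add[OF assms(1) this] show ?thesis by simp
qed

lemma infsum_diff':
  fixes f g :: "'a \<Rightarrow> 'b::{topological_ab_group_add, t2_space}"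
  assumes "f summable_on A" "g summable_on A"
  shows "infsum (\<lambda>x. f x - g x) A = infsum f A - infsum g A"
proof -
  have "(\<lambda>x. - g x) summable_on A" using assms(2) summable_on_uminus by blast
  from infsum_add[OF assms(1) this] show ?thesis by (simp add: infsum_uminus)
qed

lemma cdens_summable: "(\<lambda>k. cdens t k) summable_on UNIV"
proof (rule nonneg_bdd_above_summable_on)
  show "\<And>k. k \<in> UNIV \<Longrightarrow> 0 \<le> cdens t k" by (rule cdens_nonneg)
  show "bdd_above (sum (\<lambda>k. cdens t k) ` {F. F \<subseteq> UNIV \<and> finite F})"
    unfolding bdd_above_def using cdens_sum_le by blast
qed

lemma cdens_infsum_le: "infsum (\<lambda>k. cdens t k) UNIV \<le> 1"
  by (rule infsum_le_finite_sums[OF cdens_summable]) (rule cdens_sum_le)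

lemma gam_eq: "gam t \<theta> = infsum (\<lambda>k. of_real (cdens t k) * zz \<theta> k) UNIV"
  unfolding gam_def zz_def ..

lemma sum_parity_total:
  "(\<Sum>n<2^K. f n) = (\<Sum>n | n < 2 ^ K \<and> n mod 2 = 0. f n) + (\<Sum>n | n < 2 ^ K \<and> n mod 2 = (1::nat). (f n :: complex))"
proof -
  have eq: "{..<(2::nat)^K} = {n. n < 2 ^ K \<and> n mod 2 = 0} \<union> {n. n < 2 ^ K \<and> n mod 2 = 1}" by auto
  have f1: "finite {n::nat. n < 2 ^ K \<and> n mod 2 = 0}" "finite {n::nat. n < 2 ^ K \<and> n mod 2 = 1}" by auto
  have d: "{n::nat. n < 2 ^ K \<and> n mod 2 = 0} \<inter> {n. n < 2 ^ K \<and> n mod 2 = 1} = {}" by auto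
  show ?thesis unfolding eq by (rule sum.union_disjoint[OF f1 d])
qed

lemma gam_approx:
  assumes K: "1 \<le> K"
  shows "cmod (gam t \<theta> - (SS K t 0 \<theta> + SS K t 1 \<theta>)) \<le> 4 * real t / 2^K"
proof -
  define p :: real where "p = 2^K"
  have p0: "0 < p" unfolding p_def by simp
  define c' where "c' k = real (card (Gd K t k)) / p" for k
  define g where "g k = of_real (cdens t k) * zz \<theta> k" for k
  define h where "h k = of_real (c' k) * zz \<theta> k" for k
  define Ks where "Ks = dd t ` {..<2^K}"
  define G where "G = {s. s < 2^K \<and> good K t s}"
  have fKs: "finite Ks" unfolding Ks_def by simp
  have fG: "finite G" unfolding G_def by simp
  have GdG: "Gd K t k = {s \<in> G. dd t s = k}" for k unfolding Gd_def G_def by auto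
  have c'0: "c' k = 0" if "k \<notin> Ks" for k
  proof -
    have "Gd K t k = {}" using that unfolding Gd_def Ks_def by auto
    then show ?thesis unfolding c'_def by simp
  qed
  have c'le: "c' k \<le> cdens t k" for k unfolding c'_def p_def by (rule cdens_lower[OF K])
  have sum_c': "(\<Sum>k\<in>Ks. c' k) = real (card G) / p"
  proof -
    have "(\<Sum>k\<in>Ks. real (card (Gd K t k))) = (\<Sum>k\<in>Ks. \<Sum>s | s \<in> G \<and> dd t s = k. (1::real))"
      unfolding GdG by simp
    also have "\<dots> = (\<Sum>s\<in>G. (1::real))" by (rule sum.group[OF fG fKs]) (auto simp: G_def Ks_def)
    finally show ?thesis unfolding c'_def by (simp add: sum_divide_distrib[symmetric])
  qed
  have sum_h: "(\<Sum>k\<in>Ks. h k) = (\<Sum>s\<in>G. zz \<theta> (dd t s)) / of_real p"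
  proof -
    have "(\<Sum>k\<in>Ks. of_real (real (card (Gd K t k))) * zz \<theta> k) = (\<Sum>k\<in>Ks. \<Sum>s | s \<in> G \<and> dd t s = k. zz \<theta> (dd t s))"
    proof (rule sum.cong[OF refl])
      fix k assume "k \<in> Ks"
      have "(\<Sum>s | s \<in> G \<and> dd t s = k. zz \<theta> (dd t s)) = (\<Sum>s | s \<in> G \<and> dd t s = k. zz \<theta> k)"
        by (rule sum.cong) auto
      also have "\<dots> = of_nat (card {s \<in> G. dd t s = k}) * zz \<theta> k" by simp
      finally show "of_real (real (card (Gd K t k))) * zz \<theta> k = (\<Sum>s | s \<in> G \<and> dd t s = k. zz \<theta> (dd t s))"
        unfolding GdG by simp
    qed
    also have "\<dots> = (\<Sum>s\<in>G. zz \<theta> (dd t s))" by (rule sum.group[OF fG fKs]) (auto simp: G_def Ks_def)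
    finally have e: "(\<Sum>k\<in>Ks. of_real (real (card (Gd K t k))) * zz \<theta> k) = (\<Sum>s\<in>G. zz \<theta> (dd t s))" .
    have hk: "h k = of_real (real (card (Gd K t k))) * zz \<theta> k / of_real p" for k
      unfolding h_def c'_def by (simp add: of_real_divide)
    have "(\<Sum>k\<in>Ks. h k) = (\<Sum>k\<in>Ks. of_real (real (card (Gd K t k))) * zz \<theta> k) / of_real p"
      unfolding hk by (rule sum_divide_distrib[symmetric])
    then show ?thesis unfolding e .
  qed
  have g_abs: "(\<lambda>k. norm (g k)) summable_on UNIV"
    unfolding g_def norm_mult norm_zz norm_of_real using cdens_summable cdens_nonneg by simp
  have g_sum: "g summable_on UNIV" by (rule abs_summable_summable[OF g_abs])
  have c'_sum: "c' summable_on UNIV"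
    using summable_on_cong_neutral[of Ks UNIV c' c'] c'0 fKs by auto
  have h_sum: "h summable_on UNIV"
    using summable_on_cong_neutral[of Ks UNIV h h] c'0 fKs unfolding h_def by auto
  have inf_c': "infsum c' UNIV = (\<Sum>k\<in>Ks. c' k)"
    using infsum_cong_neutral[of Ks UNIV c' c'] c'0 fKs by auto
  have inf_h: "infsum h UNIV = (\<Sum>k\<in>Ks. h k)"
    using infsum_cong_neutral[of Ks UNIV h h] c'0 fKs unfolding h_def by auto
  have d_norm: "norm (g k - h k) = cdens t k - c' k" for k
  proof -
    have "g k - h k = of_real (cdens t k - c' k) * zz \<theta> k" unfolding g_def h_def by (simp add: algebra_simps)
    then have "norm (g k - h k) = norm (of_real (cdens t k - c' k) :: complex) * norm (zz \<theta> k)"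
      by (simp only: norm_mult)
    also have "\<dots> = \<bar>cdens t k - c' k\<bar>" by (simp only: norm_of_real norm_zz mult_1_right)
    finally show ?thesis using c'le[of k] by simp
  qed
  have d_sum: "(\<lambda>k. cdens t k - c' k) summable_on UNIV" by (rule summable_diff'[OF cdens_summable c'_sum])
  have "cmod (gam t \<theta> - infsum h UNIV) = cmod (infsum (\<lambda>k. g k - h k) UNIV)"
    unfolding gam_eq g_def[symmetric] by (simp add: infsum_diff'[OF g_sum h_sum])
  also have "\<dots> \<le> infsum (\<lambda>k. norm (g k - h k)) UNIV"
    by (rule norm_infsum_bound) (simp add: d_norm d_sum)
  also have "\<dots> = infsum (\<lambda>k. cdens t k) UNIV - infsum c' UNIV"
    unfolding d_norm by (rule infsum_diff'[OF cdens_summable c'_sum])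
  also have "\<dots> \<le> 1 - real (card G) / p"
    using cdens_infsum_le unfolding inf_c' sum_c' by simp
  finally have E1: "cmod (gam t \<theta> - infsum h UNIV) \<le> 1 - real (card G) / p" .
  have GB: "{..<(2::nat)^K} = G \<union> Bd K t" "G \<inter> Bd K t = {}" unfolding G_def Bd_def by auto
  have fB: "finite (Bd K t)" unfolding Bd_def by simp
  have "card (G \<union> Bd K t) = card G + card (Bd K t)" by (rule card_Un_disjoint[OF fG fB GB(2)])
  then have cardGB: "card G + card (Bd K t) = 2^K" unfolding GB(1)[symmetric] by simp
  then have "real (card G) + real (card (Bd K t)) = p" unfolding p_def
    by (simp only: of_nat_add[symmetric] of_nat_power of_nat_numeral)
  then have cG: "real (card G) = p - real (card (Bd K t))" by simp
  have "real (card (Bd K t)) \<le> real (2 * t)" using card_Bd[of K t] by (rule of_nat_mono)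
  then have cB: "real (card (Bd K t)) \<le> 2 * real t" by simp
  have E1': "cmod (gam t \<theta> - infsum h UNIV) \<le> real (card (Bd K t)) / p"
    using E1 p0 unfolding cG by (simp add: field_simps)
  have tot: "SS K t 0 \<theta> + SS K t 1 \<theta> = (\<Sum>s\<in>G. zz \<theta> (dd t s)) / of_real p + (\<Sum>s\<in>Bd K t. zz \<theta> (dd t s)) / of_real p"
  proof -
    have "SS K t 0 \<theta> + SS K t 1 \<theta> = (\<Sum>n<2^K. zz \<theta> (dd t n)) / of_real p"
      unfolding SS_def sum_parity_total p_def by (simp add: add_divide_distrib)
    also have "(\<Sum>n<2^K. zz \<theta> (dd t n)) = (\<Sum>s\<in>G. zz \<theta> (dd t s)) + (\<Sum>s\<in>Bd K t. zz \<theta> (dd t s))"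
      unfolding GB(1) by (rule sum.union_disjoint[OF fG _ GB(2)]) (simp add: Bd_def)
    finally show ?thesis by (simp add: add_divide_distrib)
  qed
  have E2: "cmod (infsum h UNIV - (SS K t 0 \<theta> + SS K t 1 \<theta>)) \<le> real (card (Bd K t)) / p"
  proof -
    have "infsum h UNIV - (SS K t 0 \<theta> + SS K t 1 \<theta>) = - ((\<Sum>s\<in>Bd K t. zz \<theta> (dd t s)) / of_real p)"
      unfolding inf_h sum_h tot by simp
    then have "cmod (infsum h UNIV - (SS K t 0 \<theta> + SS K t 1 \<theta>)) = cmod (\<Sum>s\<in>Bd K t. zz \<theta> (dd t s)) / p"
      using p0 by (simp add: norm_divide)
    also have "cmod (\<Sum>s\<in>Bd K t. zz \<theta> (dd t s)) \<le> (\<Sum>s\<in>Bd K t. cmod (zz \<theta> (dd t s)))" by (rule norm_sum)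
    finally show ?thesis using p0 by (simp add: divide_right_mono)
  qed
  have e3: "gam t \<theta> - (SS K t 0 \<theta> + SS K t 1 \<theta>) = (gam t \<theta> - infsum h UNIV) + (infsum h UNIV - (SS K t 0 \<theta> + SS K t 1 \<theta>))"
    by simp
  have "cmod (gam t \<theta> - (SS K t 0 \<theta> + SS K t 1 \<theta>)) \<le> cmod (gam t \<theta> - infsum h UNIV) + cmod (infsum h UNIV - (SS K t 0 \<theta> + SS K t 1 \<theta>))"
    by (subst e3) (rule norm_triangle_ineq)
  also have "\<dots> \<le> real (card (Bd K t)) / p + real (card (Bd K t)) / p" using E1' E2 by (rule add_mono)
  also have "\<dots> \<le> 4 * real t / p" using cB p0 by (simp add: field_simps)
  finally show ?thesis unfolding p_def .
qed


lemma blocks_pos: "0 < t \<Longrightarrow> 1 \<le> blocks01 t"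
proof (induction t rule: less_induct)
  case (less t)
  have b: "blocks01 t = (if t mod 4 = 1 then 1 else 0) + blocks01 (t div 2)"
    using less.prems by (simp add: blocks01.simps[of t])
  show ?case
  proof (cases "t mod 4 = 1")
    case True then show ?thesis using b by simp
  next
    case False
    then have "t \<noteq> 1" by auto
    then have "0 < t div 2" using less.prems by auto
    then have "1 \<le> blocks01 (t div 2)" using less.IH[of "t div 2"] less.prems by simp
    then show ?thesis using b by simp
  qed
qed

lemma pow_small:
  assumes "0 < e" "0 \<le> C"
  shows "\<exists>J. C / 2^J < (e::real)"
proof -
  obtain n :: nat where n: "C / e < real n" using reals_Archimedean2 by blast
  have "n < 2 ^ n" by (rule less_exp)
  then have "real n < real ((2::nat) ^ n)" by (simp only: of_nat_less_iff)
  then have "real n < 2 ^ n" by simp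
  then have "C / e < 2 ^ n" using n by linarith
  then have "C < e * 2 ^ n" using assms by (simp add: divide_less_eq mult.commute)
  then have "C / 2 ^ n < e" by (simp add: divide_less_eq mult.commute)
  then show ?thesis by blast
qed

lemma le_of_all_J:
  assumes "\<And>J. (x::real) \<le> y + C / 2^J" "0 \<le> C"
  shows "x \<le> y"
proof (rule ccontr)
  assume "\<not> x \<le> y"
  then have "0 < x - y" by simp
  then obtain J where "C / 2^J < x - y" using pow_small assms(2) by blast
  then show False using assms(1)[of J] by simp
qed

lemma lin_comb: "(a::real) \<le> A \<Longrightarrow> b \<le> 2 * P \<Longrightarrow> P \<le> Q \<Longrightarrow> a + b \<le> A + 2 * Q"
  by linarith

lemma gam_zero: "gam 0 \<theta> = 1"
proof -
  have "cmod (gam 0 \<theta> - (SS (Suc 0) 0 0 \<theta> + SS (Suc 0) 0 1 \<theta>)) \<le> 4 * real 0 / 2^(Suc 0)"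
    by (rule gam_approx) simp
  moreover have z0: "SS (Suc 0) 0 0 \<theta> = 1/2" by (rule SS_zero) simp
  moreover have z1: "SS (Suc 0) 0 1 \<theta> = 1/2" by (rule SS_zero) simp
  ultimately have "cmod (gam 0 \<theta> - (1/2 + 1/2)) \<le> 0" by simp
  then show ?thesis by simp
qed

theorem proposition3p9:
  shows "\<exists>L::real. \<forall>(t::nat) (\<theta>::real). \<bar>\<theta>\<bar> \<le> pi \<longrightarrow>
    cmod (gam t \<theta> - complex_of_real (exp (- (vv t / 2) * \<theta>^2)))
      \<le> L * real (blocks01 t) * \<bar>\<theta>\<bar>^3"
proof (intro exI allI impI)
  fix t :: nat and \<theta> :: real
  assume "\<bar>\<theta>\<bar> \<le> pi"
  then have th: "\<bar>\<theta>\<bar> \<le> 4" using pi_less_4 by linarith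
  show "cmod (gam t \<theta> - complex_of_real (exp (- (vv t / 2) * \<theta>^2))) \<le> 1100 * real (blocks01 t) * \<bar>\<theta>\<bar>^3"
  proof (cases "t = 0")
    case True
    then show ?thesis by (simp add: gam_zero)
  next
    case False
    define N where "N = real (blocks01 t)"
    have N1: "1 \<le> N" unfolding N_def using blocks_pos[of t] False by simp
    have chN: "real (chg t) \<le> 2 * N"
    proof -
      have "chg t \<le> 2 * blocks01 t" using chg_blocks[of t] by simp
      then have "real (chg t) \<le> real (2 * blocks01 t)" by (rule of_nat_mono)
      then show ?thesis unfolding N_def by simp
    qed
    define l where "l = lc \<theta>"
    have l0: "0 \<le> l" unfolding l_def by (rule lc_nonneg)
    let ?x = "cmod (gam t \<theta> - complex_of_real (exp (- (vv t / 2) * \<theta>^2)))"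
    have bound: "?x \<le> 22 * N * l + (4 * real t + 56) / 2^J" for J
    proof -
      define K where "K = Suc (Suc J) + blen t"
      have K1: "1 \<le> K" unfolding K_def by simp
      have a: "cmod (gam t \<theta> - (SS K t 0 \<theta> + SS K t 1 \<theta>)) \<le> 4 * real t / 2^K" by (rule gam_approx[OF K1])
      have b: "cmod (SS K t 0 \<theta> + SS K t 1 \<theta> - of_real (exp (-(vv t/2) * \<theta>^2))) \<le> 2 * Phi K t \<theta>"
        by (rule SS_total_bound[OF th])
      have c: "Phi K t \<theta> \<le> 3 * l + 28 / 2 ^ (Suc (Suc J)) + 4 * l * chg t"
        unfolding K_def l_def by (rule Phi_main[OF th])
      have pJ: "(2::real)^J \<le> 2^K" unfolding K_def by (rule power_increasing) auto
      have e: "gam t \<theta> - complex_of_real (exp (- (vv t / 2) * \<theta>^2)) =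
          (gam t \<theta> - (SS K t 0 \<theta> + SS K t 1 \<theta>)) + (SS K t 0 \<theta> + SS K t 1 \<theta> - of_real (exp (-(vv t/2) * \<theta>^2)))"
        by simp
      have "?x \<le> cmod (gam t \<theta> - (SS K t 0 \<theta> + SS K t 1 \<theta>)) + cmod (SS K t 0 \<theta> + SS K t 1 \<theta> - of_real (exp (-(vv t/2) * \<theta>^2)))"
        by (subst e) (rule norm_triangle_ineq)
      also have "\<dots> \<le> 4 * real t / 2^K + 2 * (3 * l + 28 / 2 ^ (Suc (Suc J)) + 4 * l * chg t)"
        by (rule lin_comb[OF a b c])
      also have "4 * real t / 2^K \<le> 4 * real t / 2^J"
        by (rule divide_left_mono[OF pJ]) auto
      also have "28 / (2::real) ^ (Suc (Suc J)) \<le> 28 / 2^J"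
        by (rule divide_left_mono) auto
      also have "4 * l * real (chg t) \<le> 4 * l * (2 * N)"
        by (rule mult_left_mono[OF chN]) (use l0 in simp)
      also have "3 * l \<le> 3 * l * N" using l0 N1 by (simp add: mult_le_cancel_left1)
      finally have "?x \<le> 4 * real t / 2^J + 2 * (3 * l * N + 28 / 2 ^ J + 4 * l * (2 * N))" by simp
      also have "\<dots> = 22 * N * l + (4 * real t + 56) / 2^J" by (simp add: field_simps)
      finally show ?thesis .
    qed
    have "?x \<le> 22 * N * l" by (rule le_of_all_J[OF bound]) simp
    then show ?thesis unfolding l_def lc_def N_def by (simp add: algebra_simps)
  qed
qed


end
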